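(* Let $n\ge3$ and suppose $T=T_\lambda(r,m)$ acts linearly and inner faithfully on $\Bbbk\overline{Q}$ so that $g$ acts by a reflection: $g\cdot e_i=e_{n-(d+i)}$, $g\cdot a_i=\mu_ia^*_{n-(d+i+1)}$, $g\cdot a_i^*=\mu_i^*a_{n-(d+i+1)}$ for some integer $0<d\le n-1$ and $\mu_i,\mu_i^*\in\Bbbk^\times$, and that this action descends to an action on $\Pi_Q$. Then $r=2$ and $\mu_i\mu_i^*=1$ for all $i$.
   Context: Let $\Bbbk$ be a field, $r>1$ and $m$ positive integers with $r\mid m$, and $\lambda\in\Bbbk$ a primitive $r$-th root of unity, with $r$ coprime to the characteristic of $\Bbbk$. The generalized Taft algebra $T=T_\lambda(r,m)$ is the Hopf algebra generated by $g,x$ with relations $gx=\lambda xg$, $g^m=1$, $x^r=0$, $\Delta(g)=g\otimes g$, $\Delta(x)=1\otimes x+x\otimes g$, $\varepsilon(g)=1,\varepsilon(x)=0$, $S(g)=g^{-1}$, $S(x)=-xg^{-1}$. An action of $T$ on an algebra $A$ is a $T$-module algebra structure; so $g$ acts by an algebra automorphism and $x\cdot(ab)=a(x\cdot b)+(x\cdot a)(g\cdot b)$. It is inner faithful if no nonzero Hopf ideal $I$ of $T$ satisfies $I\cdot A=0$. Vertex indices are taken modulo $n$. $\overline{Q}$ has vertices $0,\dots,n-1$ and arrows $a_i:i\to i+1$, $a_i^*:i+1\to i$; in $\Bbbk\overline{Q}$, $e_i$ is the trivial path at $i$ and $pq$ is concatenation ($p$ then $q$) if the target of $p$ is the source of $q$,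 else $0$. $\Pi_Q=\Bbbk\overline{Q}/(\Omega)$, $(\Omega)$ the ideal generated by $a_i^*a_i-a_{i+1}a_{i+1}^*$; the action descends to $\Pi_Q$ if $(\Omega)$ is stable under $g$ and $x$. A linear action: $g$ acts by a path-length-preserving automorphism and $x$ maps vertices into the span of vertices and arrows into the span of vertices and arrows. *)

theory Defs
  imports Main
begin

text \<open>Vertices 0..n-1 (indices mod n).  Fw i is the arrow a_i : i -> i+1,
  Bw i is the arrow a_i^* : i+1 -> i.\<close>
datatype arrow = Fw nat | Bw nat

type_synonym path = "nat \<times> arrow list"   \<comment> \<open>start vertex and arrow list (left to right)\<close>
type_synonym 'k pel = "path \<Rightarrow> 'k"     \<comment> \<open>coefficient functions: elements of k Qbar\<close>

fun asrc :: "nat \<Rightarrow> arrow \<Rightarrow> nat" where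
  "asrc n (Fw i) = i"
| "asrc n (Bw i) = Suc i mod n"

fun atgt :: "nat \<Rightarrow> arrow \<Rightarrow> nat" where
  "atgt n (Fw i) = Suc i mod n"
| "atgt n (Bw i) = i"

fun aidx :: "arrow \<Rightarrow> nat" where
  "aidx (Fw i) = i"
| "aidx (Bw i) = i"

fun walk_ok :: "nat \<Rightarrow> nat \<Rightarrow> arrow list \<Rightarrow> bool" where
  "walk_ok n v [] = True"
| "walk_ok n v (a # as) = (asrc n a = v \<and> walk_ok n (atgt n a) as)"

fun walk_end :: "nat \<Rightarrow> nat \<Rightarrow> arrow list \<Rightarrow> nat" where
  "walk_end n v [] = v"
| "walk_end n v (a # as) = walk_end n (atgt n a) as"

definition valid_path :: "nat \<Rightarrow> path \<Rightarrow> bool" where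
  "valid_path n p \<longleftrightarrow> fst p < n \<and> (\<forall>a\<in>set (snd p). aidx a < n) \<and> walk_ok n (fst p) (snd p)"

definition path_alg :: "nat \<Rightarrow> ('k::field) pel set" where
  "path_alg n = {f. finite {p. f p \<noteq> 0} \<and> (\<forall>p. f p \<noteq> 0 \<longrightarrow> valid_path n p)}"

text \<open>Multiplication = bilinear extension of concatenation (p then q).\<close>
definition pmult :: "nat \<Rightarrow> ('k::field) pel \<Rightarrow> 'k pel \<Rightarrow> 'k pel" where
  "pmult n f h = (\<lambda>p. if valid_path n p then
      (\<Sum>k\<le>length (snd p). f (fst p, take k (snd p)) *
                           h (walk_end n (fst p) (take k (snd p)), drop k (snd p)))
    else 0)"

definition padd :: "('k::field) pel \<Rightarrow> 'k pel \<Rightarrow> 'k pel" where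
  "padd f h = (\<lambda>p. f p + h p)"

definition psub :: "('k::field) pel \<Rightarrow> 'k pel \<Rightarrow> 'k pel" where
  "psub f h = (\<lambda>p. f p - h p)"

definition pscale :: "'k::field \<Rightarrow> 'k pel \<Rightarrow> 'k pel" where
  "pscale c f = (\<lambda>p. c * f p)"

definition pzero :: "('k::field) pel" where
  "pzero = (\<lambda>p. 0)"

definition basis_el :: "path \<Rightarrow> ('k::field) pel" where
  "basis_el q = (\<lambda>p. if p = q then 1 else 0)"

definition vtx :: "nat \<Rightarrow> ('k::field) pel" where
  "vtx i = basis_el (i, [])"

definition arr :: "nat \<Rightarrow> arrow \<Rightarrow> ('k::field) pel" where
  "arr n a = basis_el (asrc n a, [a])"

definition one_el :: "nat \<Rightarrow> ('k::field) pel" where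
  "one_el n = (\<lambda>p. if snd p = [] \<and> fst p < n then 1 else 0)"

definition rho :: "nat \<Rightarrow> nat \<Rightarrow> ('k::field) pel" where
  "rho n i = psub (pmult n (arr n (Bw i)) (arr n (Fw i)))
                  (pmult n (arr n (Fw (Suc i mod n))) (arr n (Bw (Suc i mod n))))"

definition is_ideal :: "nat \<Rightarrow> ('k::field) pel set \<Rightarrow> bool" where
  "is_ideal n I \<longleftrightarrow> I \<subseteq> path_alg n \<and> pzero \<in> I \<and>
     (\<forall>f\<in>I. \<forall>h\<in>I. padd f h \<in> I) \<and> (\<forall>c. \<forall>f\<in>I. pscale c f \<in> I) \<and>
     (\<forall>f\<in>I. \<forall>u\<in>path_alg n. pmult n u f \<in> I \<and> pmult n f u \<in> I)"

definition Omega :: "nat \<Rightarrow> ('k::field) pel set" where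
  "Omega n = \<Inter>{I. is_ideal n I \<and> (\<forall>i<n. rho n i \<in> I)}"

text \<open>The action descends to Pi_Q = k Qbar/(Omega).\<close>
definition descends :: "nat \<Rightarrow> (('k::field) pel \<Rightarrow> 'k pel) \<Rightarrow> ('k pel \<Rightarrow> 'k pel) \<Rightarrow> bool" where
  "descends n phi dlt \<longleftrightarrow> phi ` Omega n \<subseteq> Omega n \<and> dlt ` Omega n \<subseteq> Omega n"

text \<open>phi is the action of g, dlt the action of x.  A T-module structure is given by
  operators satisfying the defining relations of T, and the module-algebra axioms
  follow from those on the generators g, x.\<close>
definition taft_module_algebra ::
  "nat \<Rightarrow> nat \<Rightarrow> nat \<Rightarrow> 'k::field \<Rightarrow> ('k pel \<Rightarrow> 'k pel) \<Rightarrow> ('k pel \<Rightarrow> 'k pel) \<Rightarrow> bool" where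
  "taft_module_algebra n r m q phi dlt \<longleftrightarrow>
     (\<forall>f\<in>path_alg n. phi f \<in> path_alg n \<and> dlt f \<in> path_alg n) \<and>
     (\<forall>f\<in>path_alg n. \<forall>h\<in>path_alg n. phi (padd f h) = padd (phi f) (phi h) \<and>
                                      dlt (padd f h) = padd (dlt f) (dlt h)) \<and>
     (\<forall>c. \<forall>f\<in>path_alg n. phi (pscale c f) = pscale c (phi f) \<and> dlt (pscale c f) = pscale c (dlt f)) \<and>
     (\<forall>f\<in>path_alg n. \<forall>h\<in>path_alg n. phi (pmult n f h) = pmult n (phi f) (phi h)) \<and>
     (\<forall>f\<in>path_alg n. \<forall>h\<in>path_alg n.
          dlt (pmult n f h) = padd (pmult n f (dlt h)) (pmult n (dlt f) (phi h))) \<and>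
     phi (one_el n) = one_el n \<and> dlt (one_el n) = pzero \<and>
     (\<forall>f\<in>path_alg n. phi (dlt f) = pscale q (dlt (phi f))) \<and>
     (\<forall>f\<in>path_alg n. (phi ^^ m) f = f) \<and>
     (\<forall>f\<in>path_alg n. (dlt ^^ r) f = pzero)"

definition linear_x_action :: "nat \<Rightarrow> (('k::field) pel \<Rightarrow> 'k pel) \<Rightarrow> bool" where
  "linear_x_action n dlt \<longleftrightarrow>
     (\<forall>i<n. \<forall>p. dlt (vtx i) p \<noteq> 0 \<longrightarrow> length (snd p) = 0) \<and>
     (\<forall>a. aidx a < n \<longrightarrow> (\<forall>p. dlt (arr n a) p \<noteq> 0 \<longrightarrow> length (snd p) \<le> 1))"

text \<open>Elements of T: coefficient functions t(a,b) for the basis g^a x^b,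
  0 <= a < m, 0 <= b < r.\<close>
type_synonym 'k tel = "nat \<times> nat \<Rightarrow> 'k"
type_synonym 'k ttel = "(nat \<times> nat) \<times> (nat \<times> nat) \<Rightarrow> 'k"

definition tbasis :: "nat \<Rightarrow> nat \<Rightarrow> (nat \<times> nat) set" where
  "tbasis r m = {..<m} \<times> {..<r}"

definition tset :: "nat \<Rightarrow> nat \<Rightarrow> ('k::field) tel set" where
  "tset r m = {t. \<forall>p. t p \<noteq> 0 \<longrightarrow> p \<in> tbasis r m}"

definition tb :: "nat \<times> nat \<Rightarrow> ('k::field) tel" where
  "tb p = (\<lambda>u. if u = p then 1 else 0)"

text \<open>g^a x^b * g^c x^d = q^(-bc) g^(a+c) x^(b+d), since x g = q^(-1) g x.\<close>
definition bprod :: "nat \<Rightarrow> nat \<Rightarrow> 'k::field \<Rightarrow> nat \<times> nat \<Rightarrow> nat \<times> nat \<Rightarrow> 'k tel" where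
  "bprod r m q p p' = (if snd p + snd p' < r
      then (\<lambda>u. if u = ((fst p + fst p') mod m, snd p + snd p') then (inverse q) ^ (snd p * fst p') else 0)
      else (\<lambda>u. 0))"

definition tmul :: "nat \<Rightarrow> nat \<Rightarrow> 'k::field \<Rightarrow> 'k tel \<Rightarrow> 'k tel \<Rightarrow> 'k tel" where
  "tmul r m q t s = (\<lambda>u. \<Sum>p\<in>tbasis r m. \<Sum>p'\<in>tbasis r m. t p * s p' * bprod r m q p p' u)"

definition tpow :: "nat \<Rightarrow> nat \<Rightarrow> 'k::field \<Rightarrow> 'k tel \<Rightarrow> nat \<Rightarrow> 'k tel" where
  "tpow r m q t k = (tmul r m q t ^^ k) (tb (0, 0))"

definition ttens :: "('k::field) tel \<Rightarrow> 'k tel \<Rightarrow> 'k ttel" where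
  "ttens t s = (\<lambda>w. t (fst w) * s (snd w))"

definition ttmul :: "nat \<Rightarrow> nat \<Rightarrow> 'k::field \<Rightarrow> 'k ttel \<Rightarrow> 'k ttel \<Rightarrow> 'k ttel" where
  "ttmul r m q F G = (\<lambda>w. \<Sum>p\<in>tbasis r m. \<Sum>p2\<in>tbasis r m. \<Sum>p'\<in>tbasis r m. \<Sum>p2'\<in>tbasis r m.
       F (p, p2) * G (p', p2') * bprod r m q p p' (fst w) * bprod r m q p2 p2' (snd w))"

definition ttpow :: "nat \<Rightarrow> nat \<Rightarrow> 'k::field \<Rightarrow> 'k ttel \<Rightarrow> nat \<Rightarrow> 'k ttel" where
  "ttpow r m q F k = (ttmul r m q F ^^ k) (ttens (tb (0, 0)) (tb (0, 0)))"

text \<open>Comultiplication: algebra map with Delta g = g (x) g, Delta x = 1 (x) x + x (x) g.\<close>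
definition tcomult :: "nat \<Rightarrow> nat \<Rightarrow> 'k::field \<Rightarrow> 'k tel \<Rightarrow> 'k ttel" where
  "tcomult r m q t = (\<lambda>w. \<Sum>p\<in>tbasis r m. t p *
      ttmul r m q (ttpow r m q (ttens (tb (1 mod m, 0)) (tb (1 mod m, 0))) (fst p))
                  (ttpow r m q (\<lambda>w'. ttens (tb (0, 0)) (tb (0, 1)) w' + ttens (tb (0, 1)) (tb (1 mod m, 0)) w')
                                (snd p)) w)"

definition tcounit :: "nat \<Rightarrow> ('k::field) tel \<Rightarrow> 'k" where
  "tcounit m t = (\<Sum>a<m. t (a, 0))"

text \<open>Antipode: anti-algebra map with S g = g^(-1) = g^(m-1), S x = - x g^(-1);
  S(g^a x^b) = S(x)^b S(g)^a.\<close>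
definition tantipode :: "nat \<Rightarrow> nat \<Rightarrow> 'k::field \<Rightarrow> 'k tel \<Rightarrow> 'k tel" where
  "tantipode r m q t = (\<lambda>u. \<Sum>p\<in>tbasis r m. t p *
      tmul r m q (tpow r m q (\<lambda>v. - tmul r m q (tb (0, 1)) (tb ((m - 1) mod m, 0)) v) (snd p))
                 (tpow r m q (tb ((m - 1) mod m, 0)) (fst p)) u)"

definition ttspan :: "('k::field) ttel set \<Rightarrow> 'k ttel set" where
  "ttspan X = {F. \<exists>S c. finite S \<and> S \<subseteq> X \<and> F = (\<lambda>w. \<Sum>v\<in>S. c v * v w)}"

definition hopf_ideal :: "nat \<Rightarrow> nat \<Rightarrow> 'k::field \<Rightarrow> 'k tel set \<Rightarrow> bool" where
  "hopf_ideal r m q I \<longleftrightarrow>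
     I \<subseteq> tset r m \<and> (\<lambda>u. 0) \<in> I \<and>
     (\<forall>t\<in>I. \<forall>s\<in>I. (\<lambda>u. t u + s u) \<in> I) \<and> (\<forall>c. \<forall>t\<in>I. (\<lambda>u. c * t u) \<in> I) \<and>
     (\<forall>t\<in>I. \<forall>s\<in>tset r m. tmul r m q s t \<in> I \<and> tmul r m q t s \<in> I) \<and>
     (\<forall>t\<in>I. tcomult r m q t \<in>
        ttspan {ttens u v | u v. (u \<in> I \<and> v \<in> tset r m) \<or> (u \<in> tset r m \<and> v \<in> I)}) \<and>
     (\<forall>t\<in>I. tcounit m t = 0) \<and>
     (\<forall>t\<in>I. tantipode r m q t \<in> I)"

definition tact :: "nat \<Rightarrow> nat \<Rightarrow> ('k::field pel \<Rightarrow> 'k pel) \<Rightarrow> ('k pel \<Rightarrow> 'k pel) \<Rightarrow> 'k tel \<Rightarrow> 'k pel \<Rightarrow> 'k pel" where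
  "tact r m phi dlt t f = (\<lambda>p. \<Sum>ab\<in>tbasis r m. t ab * (phi ^^ fst ab) ((dlt ^^ snd ab) f) p)"

definition inner_faithful ::
  "nat \<Rightarrow> nat \<Rightarrow> nat \<Rightarrow> 'k::field \<Rightarrow> ('k pel \<Rightarrow> 'k pel) \<Rightarrow> ('k pel \<Rightarrow> 'k pel) \<Rightarrow> bool" where
  "inner_faithful n r m q phi dlt \<longleftrightarrow>
     \<not> (\<exists>I. hopf_ideal r m q I \<and> (\<exists>t\<in>I. t \<noteq> (\<lambda>u. 0)) \<and>
            (\<forall>t\<in>I. \<forall>f\<in>path_alg n. tact r m phi dlt t f = pzero))"

definition primitive_root :: "nat \<Rightarrow> 'k::field \<Rightarrow> bool" where
  "primitive_root r q \<longleftrightarrow> q ^ r = 1 \<and> (\<forall>k. 0 < k \<and> k < r \<longrightarrow> q ^ k \<noteq> 1)"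

end

theory Submission
  imports Defs
begin

lemma valid_nil[simp]: "valid_path n (v, []) \<longleftrightarrow> v < n"
  by (simp add: valid_path_def)
lemma valid_one[simp]: "valid_path n (v, [a]) \<longleftrightarrow> v < n \<and> aidx a < n \<and> asrc n a = v"
  by (auto simp: valid_path_def)
lemma valid_two[simp]: "valid_path n (v, [a, b]) \<longleftrightarrow> v < n \<and> aidx a < n \<and> aidx b < n \<and> asrc n a = v \<and> asrc n b = atgt n a"
  by (auto simp: valid_path_def)

lemma pmult_0: "pmult n f h (v, []) = (if v < n then f (v, []) * h (v, []) else 0)"
  by (simp add: pmult_def)
lemma pmult_1: "pmult n f h (v, [a]) = (if valid_path n (v, [a]) then f (v, []) * h (v, [a]) + f (v, [a]) * h (atgt n a, []) else 0)"
  unfolding pmult_def by (simp add: atMost_Suc)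
lemma pmult_2: "pmult n f h (v, [a, b]) = (if valid_path n (v, [a, b]) then
     f (v, []) * h (v, [a, b]) + f (v, [a]) * h (atgt n a, [b]) + f (v, [a, b]) * h (atgt n b, []) else 0)"
  unfolding pmult_def by (simp add: atMost_Suc numeral_2_eq_2 add.assoc)

lemma vtx_val: "vtx i (v, as) = (if v = i \<and> as = [] then 1 else 0)"
  by (auto simp: vtx_def basis_el_def)
lemma arr_val: "arr n a (v, as) = (if v = asrc n a \<and> as = [a] then 1 else 0)"
  by (auto simp: arr_def basis_el_def)
lemma padd_val[simp]: "padd f h p = f p + h p" by (simp add: padd_def)
lemma psub_val[simp]: "psub f h p = f p - h p" by (simp add: psub_def)
lemma pscale_val[simp]: "pscale c f p = c * f p" by (simp add: pscale_def)
lemma pzero_val[simp]: "pzero p = 0" by (simp add: pzero_def)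

lemma path_alg_iff: "f \<in> path_alg n \<longleftrightarrow> finite {p. f p \<noteq> 0} \<and> (\<forall>p. f p \<noteq> 0 \<longrightarrow> valid_path n p)"
  by (simp add: path_alg_def)

lemma pa_valid: "f \<in> path_alg n \<Longrightarrow> f p \<noteq> 0 \<Longrightarrow> valid_path n p"
  unfolding path_alg_def by blast

lemma pa_invalid: "f \<in> path_alg n \<Longrightarrow> \<not> valid_path n p \<Longrightarrow> f p = 0"
  using pa_valid by blast

lemma pa_finite: "f \<in> path_alg n \<Longrightarrow> finite {p. f p \<noteq> 0}"
  by (simp add: path_alg_def)

lemma pzero_pa[simp]: "pzero \<in> path_alg n"
  by (simp add: path_alg_def pzero_def)

lemma padd_pa: "f \<in> path_alg n \<Longrightarrow> h \<in> path_alg n \<Longrightarrow> padd f h \<in> path_alg n"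
proof -
  assume f: "f \<in> path_alg n" and h: "h \<in> path_alg n"
  have "{p. padd f h p \<noteq> 0} \<subseteq> {p. f p \<noteq> 0} \<union> {p. h p \<noteq> 0}" by auto
  then have "finite {p. padd f h p \<noteq> 0}" using pa_finite[OF f] pa_finite[OF h] finite_subset by blast
  moreover have "\<forall>p. padd f h p \<noteq> 0 \<longrightarrow> valid_path n p"
  proof (intro allI impI)
    fix p assume "padd f h p \<noteq> 0"
    then have "f p \<noteq> 0 \<or> h p \<noteq> 0" by auto
    then show "valid_path n p" using pa_valid[OF f] pa_valid[OF h] by blast
  qed
  ultimately show ?thesis by (simp add: path_alg_def)
qed

lemma pscale_pa: "f \<in> path_alg n \<Longrightarrow> pscale c f \<in> path_alg n"
proof -
  assume f: "f \<in> path_alg n"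
  have "{p. pscale c f p \<noteq> 0} \<subseteq> {p. f p \<noteq> 0}" by auto
  then have "finite {p. pscale c f p \<noteq> 0}" using pa_finite[OF f] finite_subset by blast
  moreover have "\<forall>p. pscale c f p \<noteq> 0 \<longrightarrow> valid_path n p" using pa_valid[OF f] by fastforce
  ultimately show ?thesis by (simp add: path_alg_def)
qed

lemma psub_eq: "psub f h = padd f (pscale (-1) h)"
  by (simp add: psub_def padd_def pscale_def fun_eq_iff)

lemma psub_pa: "f \<in> path_alg n \<Longrightarrow> h \<in> path_alg n \<Longrightarrow> psub f h \<in> path_alg n"
  by (simp add: psub_eq padd_pa pscale_pa)

lemma basis_pa: "valid_path n p \<Longrightarrow> basis_el p \<in> path_alg n"
proof -
  assume "valid_path n p"
  moreover have "{p'. basis_el p p' \<noteq> (0::'a::field)} = {p}" by (auto simp: basis_el_def)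
  ultimately show ?thesis by (auto simp: path_alg_def basis_el_def)
qed

lemma vtx_pa: "i < n \<Longrightarrow> vtx i \<in> path_alg n"
  by (simp add: vtx_def basis_pa)

lemma asrc_lt: "0 < n \<Longrightarrow> aidx a < n \<Longrightarrow> asrc n a < n"
  by (cases a) auto
lemma atgt_lt: "0 < n \<Longrightarrow> aidx a < n \<Longrightarrow> atgt n a < n"
  by (cases a) auto

lemma arr_pa: "0 < n \<Longrightarrow> aidx a < n \<Longrightarrow> arr n a \<in> path_alg n"
  unfolding arr_def by (rule basis_pa) (simp add: asrc_lt)

lemma pmult_supp:
  assumes "pmult n f h p \<noteq> 0"
  shows "\<exists>k. f (fst p, take k (snd p)) \<noteq> 0 \<and> h (walk_end n (fst p) (take k (snd p)), drop k (snd p)) \<noteq> 0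
     \<and> valid_path n p"
proof -
  have v: "valid_path n p" using assms by (auto simp: pmult_def split: if_splits)
  then have "(\<Sum>k\<le>length (snd p). f (fst p, take k (snd p)) *
                 h (walk_end n (fst p) (take k (snd p)), drop k (snd p))) \<noteq> 0"
    using assms by (simp add: pmult_def)
  then obtain k where "f (fst p, take k (snd p)) * h (walk_end n (fst p) (take k (snd p)), drop k (snd p)) \<noteq> 0"
    by (meson sum.neutral)
  then show ?thesis using v by auto
qed

lemma pmult_pa:
  assumes f: "f \<in> path_alg n" and h: "h \<in> path_alg n"
  shows "pmult n f h \<in> path_alg n"
proof -
  let ?F = "{p. f p \<noteq> 0}" and ?H = "{p. h p \<noteq> 0}"
  have "{p. pmult n f h p \<noteq> 0} \<subseteq> (\<lambda>(x, y). (fst x, snd x @ snd y)) ` (?F \<times> ?H)"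
  proof
    fix p assume "p \<in> {p. pmult n f h p \<noteq> 0}"
    then obtain k where k: "f (fst p, take k (snd p)) \<noteq> 0"
      "h (walk_end n (fst p) (take k (snd p)), drop k (snd p)) \<noteq> 0"
      using pmult_supp by blast
    then have "((fst p, take k (snd p)), (walk_end n (fst p) (take k (snd p)), drop k (snd p))) \<in> ?F \<times> ?H"
      by auto
    moreover have "p = (\<lambda>(x, y). (fst x, snd x @ snd y)) ((fst p, take k (snd p)), (walk_end n (fst p) (take k (snd p)), drop k (snd p)))"
      by simp
    ultimately show "p \<in> (\<lambda>(x, y). (fst x, snd x @ snd y)) ` (?F \<times> ?H)" by blast
  qed
  moreover have "finite ((\<lambda>(x, y). (fst x, snd x @ snd y)) ` (?F \<times> ?H))"
    using pa_finite[OF f] pa_finite[OF h] by blast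
  ultimately have "finite {p. pmult n f h p \<noteq> 0}" using finite_subset by blast
  moreover have "\<forall>p. pmult n f h p \<noteq> 0 \<longrightarrow> valid_path n p" using pmult_supp by blast
  ultimately show ?thesis by (simp add: path_alg_def)
qed

lemma pmult_zero_l[simp]: "pmult n pzero h = pzero"
  by (simp add: pmult_def pzero_def fun_eq_iff)
lemma pmult_zero_r[simp]: "pmult n f pzero = pzero"
  by (simp add: pmult_def pzero_def fun_eq_iff)

lemma sum_single:
  assumes "finite A" "\<forall>x\<in>A. x \<noteq> a \<longrightarrow> F x = 0"
  shows "sum F A = (if a \<in> A then F a else 0)"
proof -
  have "sum F A = (\<Sum>x\<in>A. if x = a then F x else 0)"
    using assms(2) by (intro sum.cong) auto
  then show ?thesis by (simp add: sum.delta[OF assms(1)])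
qed

lemma pmult_arr_left:
  "pmult n (basis_el (v, [a])) h p =
     (if valid_path n p \<and> fst p = v \<and> snd p \<noteq> [] \<and> hd (snd p) = a then h (walk_end n v [a], tl (snd p)) else 0)"
proof (cases "valid_path n p")
  case True
  obtain w as where p: "p = (w, as)" by (cases p)
  have "pmult n (basis_el (v, [a])) h p = (\<Sum>k\<le>length as. basis_el (v, [a]) (w, take k as) *
                           h (walk_end n w (take k as), drop k as))"
    using True p by (simp add: pmult_def)
  also have "\<dots> = (if 1 \<in> {..length as} then basis_el (v, [a]) (w, take 1 as) *
                           h (walk_end n w (take 1 as), drop 1 as) else 0)"
  proof (rule sum_single)
    show "\<forall>k\<in>{..length as}. k \<noteq> 1 \<longrightarrow> basis_el (v, [a]) (w, take k as) * h (walk_end n w (take k as), drop k as) = 0"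
    proof (intro ballI impI)
      fix k assume "k \<in> {..length as}" "k \<noteq> 1"
      then have "take k as \<noteq> [a]" by (cases as; cases k) auto
      then show "basis_el (v, [a]) (w, take k as) * h (walk_end n w (take k as), drop k as) = 0"
        by (simp add: basis_el_def)
    qed
  qed simp
  also have "\<dots> = (if fst p = v \<and> snd p \<noteq> [] \<and> hd (snd p) = a then h (walk_end n v [a], tl (snd p)) else 0)"
    using p by (cases as) (auto simp: basis_el_def drop_Suc)
  finally show ?thesis using True by simp
qed (simp add: pmult_def)

lemma basis_cons:
  assumes "valid_path n (v, a # as)"
  shows "basis_el (v, a # as) = pmult n (arr n a) (basis_el (atgt n a, as))"
proof
  fix p
  have src: "asrc n a = v" using assms by (simp add: valid_path_def)
  show "basis_el (v, a # as) p = pmult n (arr n a) (basis_el (atgt n a, as)) p"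
  proof (cases "p = (v, a # as)")
    case True
    then show ?thesis using assms src unfolding arr_def pmult_arr_left by (simp add: basis_el_def)
  next
    case False
    have "\<not> (fst p = v \<and> snd p \<noteq> [] \<and> hd (snd p) = a \<and> tl (snd p) = as)"
      using False by (cases p; cases "snd p") auto
    then show ?thesis using False unfolding arr_def src pmult_arr_left by (auto simp: basis_el_def)
  qed
qed

lemma valid_cons_tl:
  assumes "valid_path n (v, a # as)" "0 < n"
  shows "valid_path n (atgt n a, as)"
  using assms by (auto simp: valid_path_def atgt_lt)

definition supp :: "('k::field) pel \<Rightarrow> path set" where
  "supp f = {p. f p \<noteq> 0}"

lemma expand_gen:
  fixes L :: "('k::field) pel \<Rightarrow> 'k pel"
  assumes add: "\<forall>f\<in>path_alg n. \<forall>h\<in>path_alg n. L (padd f h) = padd (L f) (L h)"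
    and sc: "\<forall>c. \<forall>f\<in>path_alg n. L (pscale c f) = pscale c (L f)"
    and fin: "finite S"
  shows "\<forall>f\<in>path_alg n. supp f \<subseteq> S \<longrightarrow> L f = (\<lambda>x. \<Sum>p\<in>S. f p * L (basis_el p) x)"
  using fin
proof (induction S rule: finite_induct)
  case empty
  have e: "pscale 0 pzero = (pzero::'k pel)" by (simp add: fun_eq_iff)
  have "L pzero = pscale 0 (L pzero)" using sc pzero_pa e by metis
  then have "L pzero = pzero" by (simp add: fun_eq_iff)
  moreover have "f \<in> path_alg n \<Longrightarrow> supp f \<subseteq> {} \<Longrightarrow> f = pzero" for f by (auto simp: supp_def pzero_def)
  ultimately show ?case by (auto simp: pzero_def)
next
  case (insert x S)
  show ?case
  proof (intro ballI impI)
    fix f :: "'k pel" assume f: "f \<in> path_alg n" and s: "supp f \<subseteq> insert x S"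
    define f' where "f' = f(x := 0)"
    have f'pa: "f' \<in> path_alg n"
    proof -
      have "{p. f' p \<noteq> 0} \<subseteq> {p. f p \<noteq> 0}" by (auto simp: f'_def)
      then show ?thesis using f unfolding path_alg_def f'_def by (auto intro: finite_subset)
    qed
    have s': "supp f' \<subseteq> S" using s by (auto simp: supp_def f'_def)
    have IH: "L f' = (\<lambda>y. \<Sum>p\<in>S. f' p * L (basis_el p) y)" using insert.IH f'pa s' by blast
    have eqS: "(\<Sum>p\<in>S. f' p * L (basis_el p) y) = (\<Sum>p\<in>S. f p * L (basis_el p) y)" for y
      using insert.hyps by (intro sum.cong) (auto simp: f'_def)
    show "L f = (\<lambda>y. \<Sum>p\<in>insert x S. f p * L (basis_el p) y)"
    proof (cases "f x = 0")
      case True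
      then have "f = f'" by (auto simp: f'_def)
      then have "L f = L f'" by (rule arg_cong)
      also have "\<dots> = (\<lambda>y. \<Sum>p\<in>S. f' p * L (basis_el p) y)" by (rule IH)
      also have "\<dots> = (\<lambda>y. \<Sum>p\<in>S. f p * L (basis_el p) y)" by (rule ext) (rule eqS)
      finally show ?thesis using insert.hyps True by simp
    next
      case False
      then have vx: "valid_path n x" using pa_valid[OF f] by blast
      have feq: "f = padd (pscale (f x) (basis_el x)) f'"
        by (rule ext) (simp add: f'_def basis_el_def)
      have Apa: "pscale (f x) (basis_el x) \<in> path_alg n" using pscale_pa[OF basis_pa[OF vx]] .
      have "L f = L (padd (pscale (f x) (basis_el x)) f')" using feq by (rule arg_cong)
      also have "\<dots> = padd (L (pscale (f x) (basis_el x))) (L f')"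
        using add Apa f'pa by blast
      also have "L (pscale (f x) (basis_el x)) = pscale (f x) (L (basis_el x))"
        using sc basis_pa[OF vx] by blast
      finally have "L f = padd (pscale (f x) (L (basis_el x))) (\<lambda>y. \<Sum>p\<in>S. f' p * L (basis_el p) y)"
        using IH by (simp only:)
      then show ?thesis using eqS insert.hyps by (simp add: fun_eq_iff)
    qed
  qed
qed

lemma expand:
  fixes L :: "('k::field) pel \<Rightarrow> 'k pel"
  assumes add: "\<forall>f\<in>path_alg n. \<forall>h\<in>path_alg n. L (padd f h) = padd (L f) (L h)"
    and sc: "\<forall>c. \<forall>f\<in>path_alg n. L (pscale c f) = pscale c (L f)"
    and f: "f \<in> path_alg n" and fin: "finite S" and s: "supp f \<subseteq> S"
  shows "L f x = (\<Sum>p\<in>S. f p * L (basis_el p) x)"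
  using expand_gen[OF add sc fin] f s by metis

definition degge :: "nat \<Rightarrow> ('k::field) tel \<Rightarrow> bool" where
  "degge k t \<longleftrightarrow> (\<forall>u. snd u < k \<longrightarrow> t u = 0)"

definition tdegge :: "nat \<Rightarrow> ('k::field) ttel \<Rightarrow> bool" where
  "tdegge k F \<longleftrightarrow> (\<forall>w. snd (fst w) + snd (snd w) < k \<longrightarrow> F w = 0)"

lemma bprod_nz:
  assumes "bprod r m q p p' u \<noteq> 0" "m > 0"
  shows "snd u = snd p + snd p' \<and> u \<in> tbasis r m"
  using assms by (auto simp: bprod_def tbasis_def split: if_splits)

lemma tmul_degge:
  assumes "degge k t" "degge j s"
  shows "degge (k + j) (tmul r m q t s)"
  unfolding degge_def tmul_def
proof (intro allI impI sum.neutral ballI)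
  fix u :: "nat \<times> nat" and p p'
  assume "snd u < k + j"
  show "t p * s p' * bprod r m q p p' u = 0"
  proof (cases "bprod r m q p p' u = 0")
    case False
    then have "snd u = snd p + snd p'" by (auto simp: bprod_def split: if_splits)
    then have "snd p < k \<or> snd p' < j" using \<open>snd u < k + j\<close> by auto
    then show ?thesis using assms unfolding degge_def by (metis mult_eq_0_iff)
  qed simp
qed

lemma tdegge_D: "tdegge k G \<Longrightarrow> snd (fst w) + snd (snd w) < k \<Longrightarrow> G w = 0"
  unfolding tdegge_def by blast

lemma tmul_tset:
  assumes "m > 0"
  shows "tmul r m q t s \<in> tset r m"
  unfolding tset_def
proof (intro CollectI allI impI)
  fix u assume "tmul r m q t s u \<noteq> 0"
  then obtain p p' where "bprod r m q p p' u \<noteq> 0"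
    unfolding tmul_def by (metis (no_types, lifting) mult_eq_0_iff sum.neutral)
  then show "u \<in> tbasis r m" using bprod_nz[OF _ assms] by blast
qed

lemma tpow_degge:
  assumes "degge 1 X"
  shows "degge k (tpow r m q X k)"
proof (induction k)
  case 0 show ?case by (simp add: degge_def)
next
  case (Suc k)
  have "tpow r m q X (Suc k) = tmul r m q X (tpow r m q X k)"
    by (simp add: tpow_def)
  then show ?case using tmul_degge[OF assms Suc] by simp
qed

lemma ttmul_tdegge:
  assumes "tdegge k F" "tdegge j G"
  shows "tdegge (k + j) (ttmul r m q F G)"
  unfolding tdegge_def ttmul_def
proof (intro allI impI sum.neutral ballI)
  fix w :: "(nat \<times> nat) \<times> (nat \<times> nat)" and p p2 p' p2'
  assume "snd (fst w) + snd (snd w) < k + j"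
  show "F (p, p2) * G (p', p2') * bprod r m q p p' (fst w) * bprod r m q p2 p2' (snd w) = 0"
  proof (cases "bprod r m q p p' (fst w) = 0 \<or> bprod r m q p2 p2' (snd w) = 0")
    case False
    then have "snd (fst w) = snd p + snd p'" "snd (snd w) = snd p2 + snd p2'"
      by (auto simp: bprod_def split: if_splits)
    then have "snd p + snd p2 < k \<or> snd p' + snd p2' < j"
      using \<open>snd (fst w) + snd (snd w) < k + j\<close> by auto
    then show ?thesis using assms unfolding tdegge_def
      by (metis fst_conv mult_eq_0_iff snd_conv)
  qed auto
qed

lemma ttmul_supp:
  assumes "ttmul r m q F G w \<noteq> 0" "m > 0"
  shows "fst w \<in> tbasis r m \<and> snd w \<in> tbasis r m"
proof -
  obtain p p2 p' p2' where "bprod r m q p p' (fst w) \<noteq> 0" "bprod r m q p2 p2' (snd w) \<noteq> 0"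
    using assms(1) unfolding ttmul_def by (metis (no_types, lifting) mult_eq_0_iff sum.neutral)
  then show ?thesis using bprod_nz[OF _ assms(2)] by blast
qed

lemma ttpow_tdegge:
  assumes "tdegge 1 X"
  shows "tdegge k (ttpow r m q X k)"
proof (induction k)
  case 0 show ?case by (simp add: tdegge_def)
next
  case (Suc k)
  have "ttpow r m q X (Suc k) = ttmul r m q X (ttpow r m q X k)"
    by (simp add: ttpow_def)
  then show ?case using ttmul_tdegge[OF assms Suc] by simp
qed

definition Ix :: "nat \<Rightarrow> nat \<Rightarrow> ('k::field) tel set" where
  "Ix r m = {t \<in> tset r m. \<forall>a. t (a, 0) = 0}"

lemma Ix_snd:
  assumes "t \<in> Ix r m" "t p \<noteq> 0"
  shows "snd p \<ge> 1 \<and> p \<in> tbasis r m"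
proof -
  obtain a b where p: "p = (a, b)" by (cases p)
  have "b \<noteq> 0"
  proof
    assume "b = 0" then show False using assms p by (auto simp: Ix_def)
  qed
  then show ?thesis using assms p by (auto simp: Ix_def tset_def)
qed

lemma tcomult_deg:
  fixes t :: "('k::field) tel"
  assumes "t \<in> Ix r m"
  shows "tdegge 1 (tcomult r m q t)"
  unfolding tdegge_def tcomult_def
proof (intro allI impI sum.neutral ballI)
  fix w :: "(nat \<times> nat) \<times> (nat \<times> nat)" and p
  assume w: "snd (fst w) + snd (snd w) < 1"
  show "t p * ttmul r m q (ttpow r m q (ttens (tb (1 mod m, 0)) (tb (1 mod m, 0))) (fst p))
           (ttpow r m q (\<lambda>w'. ttens (tb (0, 0)) (tb (0, 1)) w' + ttens (tb (0, 1)) (tb (1 mod m, 0)) w')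
                                (snd p)) w = 0"
  proof (cases "t p = 0")
    case False
    then have sp: "snd p \<ge> 1" using Ix_snd[OF assms] by blast
    have d0: "tdegge 0 (ttpow r m q (ttens (tb (1 mod m, 0)) (tb (1 mod m, 0))) (fst p))"
      by (simp add: tdegge_def)
    have X1: "tdegge 1 ((\<lambda>w'. ttens (tb (0, 0)) (tb (0, 1)) w' + ttens (tb (0, 1)) (tb (1 mod m, 0)) w') :: 'k ttel)"
      unfolding tdegge_def ttens_def tb_def by auto
    have "tdegge (0 + snd p) (ttmul r m q (ttpow r m q (ttens (tb (1 mod m, 0)) (tb (1 mod m, 0))) (fst p))
           (ttpow r m q (\<lambda>w'. ttens (tb (0, 0)) (tb (0, 1)) w' + ttens (tb (0, 1)) (tb (1 mod m, 0)) w')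
                                (snd p)))"
      by (rule ttmul_tdegge[OF d0 ttpow_tdegge[OF X1]])
    moreover have "snd (fst w) + snd (snd w) < 0 + snd p" using w sp by linarith
    ultimately show ?thesis by (simp add: tdegge_D)
  qed simp
qed

lemma tcomult_supp:
  assumes "tcomult r m q t w \<noteq> 0" "m > 0"
  shows "fst w \<in> tbasis r m \<and> snd w \<in> tbasis r m"
proof -
  obtain p where "ttmul r m q (ttpow r m q (ttens (tb (1 mod m, 0)) (tb (1 mod m, 0))) (fst p))
           (ttpow r m q (\<lambda>w'. ttens (tb (0, 0)) (tb (0, 1)) w' + ttens (tb (0, 1)) (tb (1 mod m, 0)) w')
                                (snd p)) w \<noteq> 0"
    using assms(1) unfolding tcomult_def by (metis (no_types, lifting) mult_eq_0_iff sum.neutral)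
  then show ?thesis using ttmul_supp[OF _ assms(2)] by blast
qed

lemma finite_tbasis: "finite (tbasis r m)"
  by (simp add: tbasis_def)

lemma ttspan_repr:
  assumes fin: "\<forall>w. F w \<noteq> 0 \<longrightarrow> fst w \<in> tbasis r m \<and> snd w \<in> tbasis r m"
    and mem: "\<forall>w. F w \<noteq> 0 \<longrightarrow> ttens (tb (fst w)) (tb (snd w)) \<in> X"
  shows "F \<in> ttspan X"
proof -
  define W where "W = {w \<in> tbasis r m \<times> tbasis r m. F w \<noteq> (0::'a::field)}"
  define emb :: "(nat \<times> nat) \<times> (nat \<times> nat) \<Rightarrow> 'a ttel" where "emb = (\<lambda>w. ttens (tb (fst w)) (tb (snd w)))"
  have finW: "finite W" unfolding W_def using finite_tbasis by auto
  have embv: "emb w w' = (if w' = w then 1 else 0)" for w w'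
    by (cases w; cases w') (auto simp: emb_def ttens_def tb_def)
  have inj: "inj_on emb W"
  proof (rule inj_onI)
    fix x y assume "emb x = emb y"
    then have "emb x x = emb y x" by simp
    then show "x = y" by (simp add: embv split: if_splits)
  qed
  define c where "c = (\<lambda>v. F (inv_into W emb v))"
  have "F = (\<lambda>w. \<Sum>v\<in>emb ` W. c v * v w)"
  proof
    fix w
    have "(\<Sum>v\<in>emb ` W. c v * v w) = (\<Sum>w'\<in>W. c (emb w') * emb w' w)"
      by (simp add: sum.reindex[OF inj])
    also have "\<dots> = (\<Sum>w'\<in>W. if w' = w then F w' else 0)"
      by (intro sum.cong refl) (auto simp: c_def inv_into_f_f[OF inj] embv)
    also have "\<dots> = (if w \<in> W then F w else 0)"
      by (simp add: sum.delta[OF finW])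
    also have "\<dots> = F w"
    proof (cases "F w = 0")
      case False
      then have "fst w \<in> tbasis r m \<and> snd w \<in> tbasis r m" using fin by blast
      then have "w \<in> tbasis r m \<times> tbasis r m" by (cases w) auto
      then show ?thesis using False by (simp add: W_def)
    qed simp
    finally show "F w = (\<Sum>v\<in>emb ` W. c v * v w)" by simp
  qed
  moreover have "emb ` W \<subseteq> X" using mem by (auto simp: W_def emb_def)
  ultimately show ?thesis unfolding ttspan_def using finW by blast
qed

lemma Ix_hopf:
  assumes "m > 0" "r > 1"
  shows "hopf_ideal r m q (Ix r m :: ('k::field) tel set)"
  unfolding hopf_ideal_def
proof (intro conjI ballI allI)
  show "Ix r m \<subseteq> tset r m" by (auto simp: Ix_def)
  show "(\<lambda>u. 0) \<in> (Ix r m :: 'k tel set)" by (simp add: Ix_def tset_def)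
next
  fix t s :: "'k tel" assume "t \<in> Ix r m" "s \<in> Ix r m"
  then show "(\<lambda>u. t u + s u) \<in> Ix r m"
    by (auto simp: Ix_def tset_def) (metis add.right_neutral)
next
  fix c :: 'k and t :: "'k tel" assume "t \<in> Ix r m"
  then show "(\<lambda>u. c * t u) \<in> Ix r m" by (auto simp: Ix_def tset_def)
next
  fix t s :: "'k tel" assume t: "t \<in> Ix r m" and s: "s \<in> tset r m"
  have dt: "degge 1 t" using t by (auto simp: Ix_def degge_def)
  have ds: "degge 0 s" by (simp add: degge_def)
  show "tmul r m q s t \<in> Ix r m"
    using tmul_tset[OF assms(1)] tmul_degge[OF ds dt] by (auto simp: Ix_def degge_def)
  show "tmul r m q t s \<in> Ix r m"
    using tmul_tset[OF assms(1)] tmul_degge[OF dt ds] by (auto simp: Ix_def degge_def)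
next
  fix t :: "'k tel" assume t: "t \<in> Ix r m"
  show "tcounit m t = 0" using t by (simp add: tcounit_def Ix_def)
  show "tcomult r m q t \<in>
        ttspan {ttens u v | u v. (u \<in> Ix r m \<and> v \<in> tset r m) \<or> (u \<in> tset r m \<and> v \<in> Ix r m)}"
  proof (rule ttspan_repr[where r=r and m=m])
    show "\<forall>w. tcomult r m q t w \<noteq> 0 \<longrightarrow> fst w \<in> tbasis r m \<and> snd w \<in> tbasis r m"
      using tcomult_supp[OF _ assms(1)] by blast
    show "\<forall>w. tcomult r m q t w \<noteq> 0 \<longrightarrow> (ttens (tb (fst w)) (tb (snd w)) :: 'k ttel)
       \<in> {ttens u v | u v. (u \<in> Ix r m \<and> v \<in> tset r m) \<or> (u \<in> tset r m \<and> v \<in> Ix r m)}"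
    proof (intro allI impI)
      fix w assume nz: "tcomult r m q t w \<noteq> 0"
      have b: "fst w \<in> tbasis r m" "snd w \<in> tbasis r m" using tcomult_supp[OF nz assms(1)] by auto
      have "tdegge 1 (tcomult r m q t)" by (rule tcomult_deg[OF t])
      then have "snd (fst w) + snd (snd w) \<ge> 1" using nz unfolding tdegge_def by (metis not_le)
      then have "snd (fst w) \<noteq> 0 \<or> snd (snd w) \<noteq> 0" by auto
      moreover have "tb (fst w) \<in> (tset r m :: 'k tel set)" "tb (snd w) \<in> (tset r m :: 'k tel set)"
        using b by (auto simp: tset_def tb_def)
      moreover have "snd (fst w) \<noteq> 0 \<Longrightarrow> tb (fst w) \<in> (Ix r m :: 'k tel set)"
        using b unfolding Ix_def tset_def tb_def by (smt (verit) mem_Collect_eq snd_conv)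
      moreover have "snd (snd w) \<noteq> 0 \<Longrightarrow> tb (snd w) \<in> (Ix r m :: 'k tel set)"
        using b unfolding Ix_def tset_def tb_def by (smt (verit) mem_Collect_eq snd_conv)
      ultimately have "(tb (fst w) \<in> (Ix r m :: 'k tel set) \<and> tb (snd w) \<in> (tset r m :: 'k tel set)) \<or>
         (tb (fst w) \<in> (tset r m :: 'k tel set) \<and> tb (snd w) \<in> (Ix r m :: 'k tel set))" by blast
      then show "(ttens (tb (fst w)) (tb (snd w)) :: 'k ttel)
       \<in> {ttens u v | u v. (u \<in> Ix r m \<and> v \<in> tset r m) \<or> (u \<in> tset r m \<and> v \<in> Ix r m)}"
        by blast
    qed
  qed
  show "tantipode r m q t \<in> Ix r m"
    unfolding Ix_def
  proof (intro CollectI conjI allI)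
    show "tantipode r m q t \<in> tset r m"
      unfolding tset_def
    proof (intro CollectI allI impI)
      fix u assume "tantipode r m q t u \<noteq> 0"
      then obtain p where "tmul r m q (tpow r m q (\<lambda>v. - tmul r m q (tb (0, 1)) (tb ((m - 1) mod m, 0)) v) (snd p))
                 (tpow r m q (tb ((m - 1) mod m, 0)) (fst p)) u \<noteq> 0"
        unfolding tantipode_def by (metis (no_types, lifting) mult_eq_0_iff sum.neutral)
      then show "u \<in> tbasis r m" using tmul_tset[OF assms(1)] unfolding tset_def by blast
    qed
  next
    fix a
    show "tantipode r m q t (a, 0) = 0"
      unfolding tantipode_def
    proof (intro sum.neutral ballI)
      fix p
      show "t p * tmul r m q (tpow r m q (\<lambda>v. - tmul r m q (tb (0, 1)) (tb ((m - 1) mod m, 0)) v) (snd p))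
                 (tpow r m q (tb ((m - 1) mod m, 0)) (fst p)) (a, 0) = 0"
      proof (cases "t p = 0")
        case False
        then have sp: "snd p \<ge> 1" using Ix_snd[OF t] by blast
        have X1: "degge 1 ((\<lambda>v. - tmul r m q (tb (0, 1)) (tb ((m - 1) mod m, 0)) v) :: 'k tel)"
        proof -
          have "degge (1 + 0) (tmul r m q (tb (0, 1)) (tb ((m - 1) mod m, 0)) :: 'k tel)"
            by (rule tmul_degge) (auto simp: degge_def tb_def)
          then show ?thesis by (simp add: degge_def)
        qed
        have "degge (snd p + 0) (tmul r m q (tpow r m q (\<lambda>v. - tmul r m q (tb (0, 1)) (tb ((m - 1) mod m, 0)) v) (snd p))
                 (tpow r m q (tb ((m - 1) mod m, 0)) (fst p)))"
          by (rule tmul_degge[OF tpow_degge[OF X1]]) (simp add: degge_def)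
        then show ?thesis using sp by (simp add: degge_def)
      qed simp
    qed
  qed
qed

lemma Ix_nonzero:
  assumes "m > 0" "r > 1"
  shows "\<exists>t\<in>(Ix r m :: ('k::field) tel set). t \<noteq> (\<lambda>u. 0)"
proof -
  have "tb (0, 1) \<in> (Ix r m :: 'k tel set)" using assms by (auto simp: Ix_def tset_def tb_def tbasis_def)
  moreover have "tb (0, 1) \<noteq> (\<lambda>u. 0::'k)" by (metis one_neq_zero tb_def)
  ultimately show ?thesis by blast
qed

locale ctx =
  fixes q :: "'k::field" and n r m d :: nat and mu mus :: "nat \<Rightarrow> 'k"
    and phi dlt :: "'k pel \<Rightarrow> 'k pel"
  assumes r1: "r > 1" and m0: "m > 0"
    and prim: "primitive_root r q"
    and n3: "n \<ge> 3"
    and tma: "taft_module_algebra n r m q phi dlt"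
    and lin: "linear_x_action n dlt"
    and d0: "0 < d" and dn: "d \<le> n - 1"
    and munz: "\<forall>i<n. mu i \<noteq> 0 \<and> mus i \<noteq> 0"
    and phiV: "\<forall>i<n. phi (vtx i) = vtx ((2 * n - (d + i)) mod n)"
    and phiF: "\<forall>i<n. phi (arr n (Fw i)) = pscale (mu i) (arr n (Bw ((2 * n - (d + i + 1)) mod n)))"
    and phiB: "\<forall>i<n. phi (arr n (Bw i)) = pscale (mus i) (arr n (Fw ((2 * n - (d + i + 1)) mod n)))"
    and desc: "descends n phi dlt"
begin

definition sg :: "nat \<Rightarrow> nat" where "sg v = (2 * n - (d + v)) mod n"
definition tau :: "nat \<Rightarrow> nat" where "tau i = (2 * n - (d + i + 1)) mod n"
definition pv :: "nat \<Rightarrow> nat" where "pv v = (v + n - 1) mod n"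
abbreviation nx :: "nat \<Rightarrow> nat" where "nx i \<equiv> Suc i mod n"

lemma n0: "0 < n" using n3 by auto

lemma sg_lt[simp]: "sg v < n" using n0 by (simp add: sg_def)
lemma tau_lt[simp]: "tau v < n" using n0 by (simp add: tau_def)
lemma pv_lt[simp]: "pv v < n" using n0 by (simp add: pv_def)
lemma nx_lt[simp]: "nx v < n" using n0 by simp

lemma mod_dvd_gen: "int n dvd int (x mod n) - int x"
proof -
  have "int (x mod n) mod int n = int x mod int n" by (simp add: zmod_int)
  then show ?thesis by (simp add: mod_eq_dvd_iff)
qed

lemma eq_by_dvd: "a < n \<Longrightarrow> b < n \<Longrightarrow> int n dvd (int a - int b) \<Longrightarrow> a = b"
proof -
  assume a: "a < n" and b: "b < n" and dv: "int n dvd (int a - int b)"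
  then have "int a mod int n = int b mod int n" by (simp only: mod_eq_dvd_iff)
  then have "int (a mod n) = int (b mod n)" by (simp only: zmod_int)
  then show "a = b" using a b by simp
qed

lemma lin3: "int n dvd X \<Longrightarrow> int n dvd Y \<Longrightarrow> int n dvd W \<Longrightarrow> Z = a * X + b * Y + c * W \<Longrightarrow> int n dvd Z"
  by simp

lemma sg_dvd: "v < n \<Longrightarrow> int n dvd int (sg v) + int d + int v"
proof -
  assume v: "v < n"
  have e: "int (2 * n - (d + v)) = 2 * int n - int d - int v" using v dn by linarith
  have "int n dvd int (sg v) - int (2 * n - (d + v))" unfolding sg_def by (rule mod_dvd_gen)
  then show ?thesis by (rule lin3[OF _ dvd_refl dvd_refl, where a=1 and b=2 and c=0]) (use e in simp)
qed

lemma tau_dvd: "v < n \<Longrightarrow> int n dvd int (tau v) + int d + int v + 1"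
proof -
  assume v: "v < n"
  have e: "int (2 * n - (d + v + 1)) = 2 * int n - int d - int v - 1" using v dn by linarith
  have "int n dvd int (tau v) - int (2 * n - (d + v + 1))" unfolding tau_def by (rule mod_dvd_gen)
  then show ?thesis by (rule lin3[OF _ dvd_refl dvd_refl, where a=1 and b=2 and c=0]) (use e in simp)
qed

lemma nx_dvd: "int n dvd int (nx v) - int v - 1"
proof -
  have "int n dvd int (nx v) - int (Suc v)" by (rule mod_dvd_gen)
  then show ?thesis by (simp add: diff_diff_eq add.commute)
qed

lemma pv_dvd: "v < n \<Longrightarrow> int n dvd int (pv v) - int v + 1"
proof -
  assume v: "v < n"
  have e: "int (v + n - 1) = int v + int n - 1" using n0 by linarith
  have "int n dvd int (pv v) - int (v + n - 1)" unfolding pv_def by (rule mod_dvd_gen)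
  then show ?thesis by (rule lin3[OF _ dvd_refl dvd_refl, where a=1 and b=1 and c=0]) (use e in simp)
qed

lemma sg_sg[simp]: "v < n \<Longrightarrow> sg (sg v) = v"
  by (rule eq_by_dvd) (auto intro!: lin3[OF sg_dvd[of "sg v"] sg_dvd[of v] dvd_refl, where a=1 and b="-1" and c=0])

lemma lin4: "int n dvd X \<Longrightarrow> int n dvd Y \<Longrightarrow> int n dvd W \<Longrightarrow> int n dvd U \<Longrightarrow>
   Z = a * X + b * Y + c * W + e * U \<Longrightarrow> int n dvd Z"
  by simp

lemma tau_tau[simp]: "v < n \<Longrightarrow> tau (tau v) = v"
  by (rule eq_by_dvd) (auto intro!: lin3[OF tau_dvd[of "tau v"] tau_dvd[of v] dvd_refl, where a=1 and b="-1" and c=0])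

lemma tau_eq: "v < n \<Longrightarrow> tau v = sg (nx v)"
  by (rule eq_by_dvd) (auto intro!: lin3[OF tau_dvd[of v] sg_dvd[of "nx v"] nx_dvd[of v], where a=1 and b="-1" and c=1])

lemma sg_eq: "v < n \<Longrightarrow> sg v = nx (tau v)"
  by (rule eq_by_dvd) (auto intro!: lin3[OF sg_dvd[of v] nx_dvd[of "tau v"] tau_dvd[of v], where a=1 and b="-1" and c="-1"])

lemma nx_pv[simp]: "v < n \<Longrightarrow> nx (pv v) = v"
  by (rule eq_by_dvd) (auto intro!: lin3[OF nx_dvd[of "pv v"] pv_dvd[of v] dvd_refl, where a=1 and b=1 and c=0])

lemma pv_nx[simp]: "v < n \<Longrightarrow> pv (nx v) = v"
  by (rule eq_by_dvd) (auto intro!: lin3[OF pv_dvd[of "nx v"] nx_dvd[of v] dvd_refl, where a=1 and b=1 and c=0])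

lemma tau_nx: "v < n \<Longrightarrow> tau (nx v) = pv (tau v)"
  by (rule eq_by_dvd) (auto intro!: lin4[OF tau_dvd[of "nx v"] pv_dvd[of "tau v"] tau_dvd[of v] nx_dvd[of v],
         where a=1 and b="-1" and c="-1" and e="-1"])

lemma n_dvd_small: "int n dvd z \<Longrightarrow> z \<noteq> 0 \<Longrightarrow> \<bar>z\<bar> < 3 \<Longrightarrow> False"
proof -
  assume a: "int n dvd z" "z \<noteq> 0" "\<bar>z\<bar> < 3"
  have "\<bar>int n\<bar> \<le> \<bar>z\<bar>" by (rule dvd_imp_le_int[OF a(2) a(1)])
  then show False using n3 a(3) by simp
qed

lemma nx_ne: "nx v \<noteq> v"
proof
  assume h: "nx v = v"
  have "int n dvd -1"
    by (rule lin3[OF nx_dvd[of v] dvd_refl dvd_refl, where a=1 and b=0 and c=0]) (simp add: h)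
  then show False using n_dvd_small[of "-1"] by simp
qed

lemma nx_nx_ne: "v < n \<Longrightarrow> nx (nx v) \<noteq> v"
proof
  assume v: "v < n" and h: "nx (nx v) = v"
  have "int n dvd -2"
    by (rule lin3[OF nx_dvd[of "nx v"] nx_dvd[of v] dvd_refl, where a=1 and b=1 and c=0]) (simp add: h)
  then show False using n_dvd_small[of "-2"] by simp
qed

lemma nx_inj: "i < n \<Longrightarrow> j < n \<Longrightarrow> nx j = nx i \<Longrightarrow> j = i"
  apply (rule eq_by_dvd, assumption, assumption)
  apply (rule lin3[OF nx_dvd[of j] nx_dvd[of i] dvd_refl, where a="-1" and b=1 and c=0])
  by simp

lemma nx_eq_pv: "i < n \<Longrightarrow> j < n \<Longrightarrow> nx j = i \<Longrightarrow> j = pv i"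
proof -
  assume a: "i < n" "j < n" "nx j = i"
  have h: "int (nx j) = int i" using a(3) by simp
  show ?thesis
    apply (rule eq_by_dvd[OF a(2) pv_lt])
    apply (rule lin3[OF nx_dvd[of j] pv_dvd[OF a(1)] dvd_refl, where a="-1" and b="-1" and c=0])
    unfolding h by simp
qed

lemma fixA: "i < n \<Longrightarrow> sg (nx i) = pv i \<Longrightarrow> sg i = i"
  apply (rule eq_by_dvd, simp, assumption)
  apply (rule lin4[OF sg_dvd[of i] sg_dvd[of "nx i"] pv_dvd[of i] nx_dvd[of i], where a=1 and b="-1" and c=1 and e=1])
     apply simp_all
  done

lemma fixB: "i < n \<Longrightarrow> nx (nx i) = sg i \<Longrightarrow> sg (nx i) = nx i"
  apply (rule eq_by_dvd, simp, simp)
  apply (rule lin4[OF sg_dvd[of "nx i"] sg_dvd[of i] nx_dvd[of "nx i"] nx_dvd[of i], where a=1 and b="-1" and c=1 and e="-1"])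
    apply simp_all
  done

lemma fixed_tau: "k < n \<Longrightarrow> sg k = k \<Longrightarrow> tau k = pv k"
  apply (rule eq_by_dvd, simp, simp)
  apply (subst tau_eq, assumption)
  apply (rule lin4[OF sg_dvd[of "nx k"] sg_dvd[of k] nx_dvd[of k] pv_dvd[of k], where a=1 and b="-1" and c="-1" and e="-1"])
    apply simp_all
  done

lemma fixed_tau_pv: "k < n \<Longrightarrow> sg k = k \<Longrightarrow> tau (pv k) = k"
  by (simp add: tau_eq)

lemma typeV_sg: "i < n \<Longrightarrow> sg (nx i) = i \<Longrightarrow> sg i = nx i"
  using sg_sg[of "nx i"] by simp

lemma typeV_tau: "i < n \<Longrightarrow> sg (nx i) = i \<Longrightarrow> tau i = i"
  by (simp add: tau_eq)

lemma fixed_iff: "k < n \<Longrightarrow> int n dvd 2 * int k + int d \<Longrightarrow> sg k = k"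
  apply (rule eq_by_dvd, simp, assumption)
  apply (rule lin3[OF sg_dvd[of k] _ dvd_refl, where a=1 and b="-1" and c=0], assumption, assumption)
  by simp

lemma typeV_iff: "i < n \<Longrightarrow> int n dvd 2 * int i + int d + 1 \<Longrightarrow> sg (nx i) = i"
  apply (rule eq_by_dvd, simp, assumption)
  apply (rule lin3[OF sg_dvd[of "nx i"] nx_dvd[of i], where a=1 and b="-1" and c="-1"], simp, assumption)
  by simp

lemma special_exists: "(\<exists>i<n. sg (nx i) = i) \<or> (\<exists>k<n. sg k = k)"
proof -
  define j0 where "j0 = (n - 1) * d div 2"
  have dj: "int n dvd 2 * int j0 + int d \<or> int n dvd 2 * int j0 + int d + 1"
  proof (cases "even ((n - 1) * d)")
    case True
    then have "2 * j0 = (n - 1) * d" unfolding j0_def by simp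
    moreover have "(n - 1) * d + d = n * d" using n0 by (cases n) auto
    ultimately have "2 * j0 + d = n * d" by simp
    then have "int (2 * j0 + d) = int (n * d)" by (rule arg_cong)
    then have "2 * int j0 + int d = int n * int d" by simp
    then show ?thesis by simp
  next
    case False
    then have "2 * j0 + 1 = (n - 1) * d" unfolding j0_def by presburger
    moreover have "(n - 1) * d + d = n * d" using n0 by (cases n) auto
    ultimately have "2 * j0 + d + 1 = n * d" by simp
    then have "int (2 * j0 + d + 1) = int (n * d)" by (rule arg_cong)
    then have "2 * int j0 + int d + 1 = int n * int d" by simp
    then show ?thesis by simp
  qed
  have md: "int n dvd int (j0 mod n) - int j0" by (rule mod_dvd_gen)
  from dj have "int n dvd 2 * int (j0 mod n) + int d \<or> int n dvd 2 * int (j0 mod n) + int d + 1"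
  proof
    assume "int n dvd 2 * int j0 + int d"
    then have "int n dvd 2 * int (j0 mod n) + int d"
      by (rule lin3[OF _ md dvd_refl, where a=1 and b=2 and c=0]) simp
    then show ?thesis ..
  next
    assume "int n dvd 2 * int j0 + int d + 1"
    then have "int n dvd 2 * int (j0 mod n) + int d + 1"
      by (rule lin3[OF _ md dvd_refl, where a=1 and b=2 and c=0]) simp
    then show ?thesis ..
  qed
  moreover have "j0 mod n < n" using n0 by simp
  ultimately show ?thesis using fixed_iff typeV_iff by blast
qed

end

lemma pmult_vtx_left:
  "pmult n (vtx v) h p = (if valid_path n p \<and> fst p = v then h p else 0)"
proof (cases "valid_path n p")
  case True
  obtain w as where p: "p = (w, as)" by (cases p)
  have "pmult n (vtx v) h p = (\<Sum>k\<le>length as. vtx v (w, take k as) * h (walk_end n w (take k as), drop k as))"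
    using True p by (simp add: pmult_def)
  also have "\<dots> = (if 0 \<in> {..length as} then vtx v (w, take 0 as) * h (walk_end n w (take 0 as), drop 0 as) else 0)"
  proof (rule sum_single)
    show "\<forall>k\<in>{..length as}. k \<noteq> 0 \<longrightarrow> vtx v (w, take k as) * h (walk_end n w (take k as), drop k as) = 0"
    proof (intro ballI impI)
      fix k assume "k \<in> {..length as}" "k \<noteq> 0"
      then have "take k as \<noteq> []" by (cases as) auto
      then show "vtx v (w, take k as) * h (walk_end n w (take k as), drop k as) = 0"
        by (simp add: vtx_val)
    qed
  qed simp
  also have "\<dots> = (if fst p = v then h p else 0)"
    using p by (simp add: vtx_val)
  finally show ?thesis using True by simp
qed (simp add: pmult_def)

lemma pmult_vtx_right:
  "pmult n f (vtx v) p = (if valid_path n p \<and> walk_end n (fst p) (snd p) = v then f p else 0)"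
proof (cases "valid_path n p")
  case True
  obtain w as where p: "p = (w, as)" by (cases p)
  have "pmult n f (vtx v) p = (\<Sum>k\<le>length as. f (w, take k as) * vtx v (walk_end n w (take k as), drop k as))"
    using True p by (simp add: pmult_def)
  also have "\<dots> = (if length as \<in> {..length as} then f (w, take (length as) as) * vtx v (walk_end n w (take (length as) as), drop (length as) as) else 0)"
  proof (rule sum_single)
    show "\<forall>k\<in>{..length as}. k \<noteq> length as \<longrightarrow> f (w, take k as) * vtx v (walk_end n w (take k as), drop k as) = 0"
    proof (intro ballI impI)
      fix k assume "k \<in> {..length as}" "k \<noteq> length as"
      then have "drop k as \<noteq> []" by simp
      then show "f (w, take k as) * vtx v (walk_end n w (take k as), drop k as) = 0"
        by (simp add: vtx_val)
    qed
  qed simp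
  also have "\<dots> = (if walk_end n (fst p) (snd p) = v then f p else 0)"
    using p by (simp add: vtx_val)
  finally show ?thesis using True by simp
qed (simp add: pmult_def)

lemma pmult_scale_r: "pmult n f (pscale c h) = pscale c (pmult n f h)"
  by (simp add: pmult_def pscale_def fun_eq_iff sum_distrib_left mult.left_commute)

lemma pmult_scale_l: "pmult n (pscale c f) h = pscale c (pmult n f h)"
  by (simp add: pmult_def pscale_def fun_eq_iff sum_distrib_left mult.assoc)

context ctx begin

abbreviation PA where "PA \<equiv> path_alg n"

lemma phi_pa: "f \<in> PA \<Longrightarrow> phi f \<in> PA" using tma by (simp add: taft_module_algebra_def)
lemma dlt_pa: "f \<in> PA \<Longrightarrow> dlt f \<in> PA" using tma by (simp add: taft_module_algebra_def)
lemma phi_add: "\<forall>f\<in>PA. \<forall>h\<in>PA. phi (padd f h) = padd (phi f) (phi h)" using tma by (simp add: taft_module_algebra_def)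
lemma dlt_add: "\<forall>f\<in>PA. \<forall>h\<in>PA. dlt (padd f h) = padd (dlt f) (dlt h)" using tma by (simp add: taft_module_algebra_def)
lemma phi_sc: "\<forall>c. \<forall>f\<in>PA. phi (pscale c f) = pscale c (phi f)" using tma by (simp add: taft_module_algebra_def)
lemma dlt_sc: "\<forall>c. \<forall>f\<in>PA. dlt (pscale c f) = pscale c (dlt f)" using tma by (simp add: taft_module_algebra_def)
lemma phi_mult: "f \<in> PA \<Longrightarrow> h \<in> PA \<Longrightarrow> phi (pmult n f h) = pmult n (phi f) (phi h)"
  using tma by (simp add: taft_module_algebra_def)
lemma dlt_mult: "f \<in> PA \<Longrightarrow> h \<in> PA \<Longrightarrow> dlt (pmult n f h) = padd (pmult n f (dlt h)) (pmult n (dlt f) (phi h))"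
  using tma by (simp add: taft_module_algebra_def)
lemma comm: "f \<in> PA \<Longrightarrow> phi (dlt f) = pscale q (dlt (phi f))"
  using tma by (simp add: taft_module_algebra_def)
lemma dlt_nil: "f \<in> PA \<Longrightarrow> (dlt ^^ r) f = pzero"
  using tma by (simp add: taft_module_algebra_def)

lemma phi_add': "f \<in> PA \<Longrightarrow> h \<in> PA \<Longrightarrow> phi (padd f h) = padd (phi f) (phi h)" using phi_add by blast
lemma dlt_add': "f \<in> PA \<Longrightarrow> h \<in> PA \<Longrightarrow> dlt (padd f h) = padd (dlt f) (dlt h)" using dlt_add by blast
lemma phi_sc': "f \<in> PA \<Longrightarrow> phi (pscale c f) = pscale c (phi f)" using phi_sc by blast
lemma dlt_sc': "f \<in> PA \<Longrightarrow> dlt (pscale c f) = pscale c (dlt f)" using dlt_sc by blast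

lemma dlt_zero[simp]: "dlt pzero = pzero"
proof -
  have "dlt (pscale 0 pzero) = pscale 0 (dlt pzero)" by (rule dlt_sc') simp
  moreover have "pscale 0 pzero = (pzero :: 'k pel)" by (simp add: fun_eq_iff)
  ultimately show ?thesis by (simp add: fun_eq_iff pscale_def pzero_def)
qed

lemma phi_zero[simp]: "phi pzero = pzero"
proof -
  have "phi (pscale 0 pzero) = pscale 0 (phi pzero)" by (rule phi_sc') simp
  moreover have "pscale 0 pzero = (pzero :: 'k pel)" by (simp add: fun_eq_iff)
  ultimately show ?thesis by (simp add: fun_eq_iff pscale_def pzero_def)
qed

lemma phi_sub: "f \<in> PA \<Longrightarrow> h \<in> PA \<Longrightarrow> phi (psub f h) = psub (phi f) (phi h)"
  by (simp add: psub_eq phi_add' phi_sc' pscale_pa)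
lemma dlt_sub: "f \<in> PA \<Longrightarrow> h \<in> PA \<Longrightarrow> dlt (psub f h) = psub (dlt f) (dlt h)"
  by (simp add: psub_eq dlt_add' dlt_sc' pscale_pa)

lemma vtx_pa'[simp]: "i < n \<Longrightarrow> vtx i \<in> PA" by (rule vtx_pa)
lemma arrF_pa[simp]: "i < n \<Longrightarrow> arr n (Fw i) \<in> PA" using n0 by (simp add: arr_pa)
lemma arrB_pa[simp]: "i < n \<Longrightarrow> arr n (Bw i) \<in> PA" using n0 by (simp add: arr_pa)

lemma phi_vtx: "i < n \<Longrightarrow> phi (vtx i) = vtx (sg i)" using phiV by (simp add: sg_def)
lemma phi_F: "i < n \<Longrightarrow> phi (arr n (Fw i)) = pscale (mu i) (arr n (Bw (tau i)))" using phiF by (simp add: tau_def)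
lemma phi_B: "i < n \<Longrightarrow> phi (arr n (Bw i)) = pscale (mus i) (arr n (Fw (tau i)))" using phiB by (simp add: tau_def)

lemma mu_nz: "i < n \<Longrightarrow> mu i \<noteq> 0" using munz by blast
lemma mus_nz: "i < n \<Longrightarrow> mus i \<noteq> 0" using munz by blast

definition short :: "'k pel \<Rightarrow> bool" where
  "short f \<longleftrightarrow> f \<in> PA \<and> (\<forall>p. f p \<noteq> 0 \<longrightarrow> length (snd p) \<le> 1)"

lemma short_D: "short f \<Longrightarrow> f p \<noteq> 0 \<Longrightarrow> valid_path n p \<and> length (snd p) \<le> 1"
  unfolding short_def using pa_valid by blast

lemma short_len2[simp]: "short f \<Longrightarrow> f (v, a # b # l) = 0"
  unfolding short_def by force

lemma dlt_vtx_short: "i < n \<Longrightarrow> short (dlt (vtx i))"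
  using lin dlt_pa[OF vtx_pa'] unfolding short_def linear_x_action_def by fastforce

lemma dlt_vtx_nil: "i < n \<Longrightarrow> dlt (vtx i) (v, a # l) = 0"
  using lin unfolding linear_x_action_def by fastforce

lemma dlt_arr_short: "aidx a < n \<Longrightarrow> short (dlt (arr n a))"
  using lin dlt_pa[OF arr_pa[OF n0]] unfolding short_def linear_x_action_def by blast

lemma shape_short:
  assumes "valid_path n p" "length (snd p) \<le> 1"
  shows "(\<exists>v. p = (v, []) \<and> v < n) \<or> (\<exists>i<n. p = (i, [Fw i])) \<or> (\<exists>i<n. p = (nx i, [Bw i]))"
proof -
  obtain v l where p: "p = (v, l)" by (cases p)
  show ?thesis
  proof (cases l)
    case Nil then show ?thesis using assms p by auto
  next
    case (Cons b l')
    then have l': "l' = []" using assms p by auto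
    show ?thesis
    proof (cases b)
      case (Fw i) then show ?thesis using assms p Cons l' by auto
    next
      case (Bw i) then show ?thesis using assms p Cons l' by auto
    qed
  qed
qed

lemma phi_basis_v: "v < n \<Longrightarrow> phi (basis_el (v, [])) = vtx (sg v)"
  using phi_vtx by (simp add: vtx_def)
lemma phi_basis_F: "i < n \<Longrightarrow> phi (basis_el (i, [Fw i])) = pscale (mu i) (arr n (Bw (tau i)))"
  using phi_F by (simp add: arr_def)
lemma phi_basis_B: "i < n \<Longrightarrow> phi (basis_el (nx i, [Bw i])) = pscale (mus i) (arr n (Fw (tau i)))"
  using phi_B by (simp add: arr_def)

lemma phi_expand: "f \<in> PA \<Longrightarrow> phi f x = (\<Sum>p\<in>supp f. f p * phi (basis_el p) x)"
  by (rule expand[OF phi_add phi_sc]) (auto simp: supp_def pa_finite)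

lemma dlt_expand: "f \<in> PA \<Longrightarrow> dlt f x = (\<Sum>p\<in>supp f. f p * dlt (basis_el p) x)"
  by (rule expand[OF dlt_add dlt_sc]) (auto simp: supp_def pa_finite)

lemma supp_fin: "f \<in> PA \<Longrightarrow> finite (supp f)" by (simp add: supp_def pa_finite)

lemma phi_short_v:
  assumes f: "short f" and w: "w < n"
  shows "phi f (w, []) = f (sg w, [])"
proof -
  have fpa: "f \<in> PA" using f by (simp add: short_def)
  have "phi f (w, []) = (\<Sum>p\<in>supp f. f p * phi (basis_el p) (w, []))" by (rule phi_expand[OF fpa])
  also have "\<dots> = (if (sg w, []) \<in> supp f then f (sg w, []) * phi (basis_el (sg w, [])) (w, []) else 0)"
  proof (rule sum_single[OF supp_fin[OF fpa]], intro ballI impI)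
    fix p assume p: "p \<in> supp f" "p \<noteq> (sg w, [])"
    then have "f p \<noteq> 0" by (simp add: supp_def)
    then have vp: "valid_path n p" "length (snd p) \<le> 1" using short_D[OF f] by blast+
    from shape_short[OF vp] show "f p * phi (basis_el p) (w, []) = 0"
    proof (elim disjE exE conjE)
      fix v assume "p = (v, [])" "v < n"
      then show ?thesis using p w by (auto simp: phi_basis_v vtx_val)
    next
      fix i assume "p = (i, [Fw i])" "i < n"
      then show ?thesis by (simp add: phi_basis_F arr_val)
    next
      fix i assume "p = (nx i, [Bw i])" "i < n"
      then show ?thesis by (simp add: phi_basis_B arr_val)
    qed
  qed
  also have "\<dots> = f (sg w, [])" using w by (auto simp: supp_def phi_basis_v vtx_val)
  finally show ?thesis .
qed

lemma phi_short_B: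
  assumes f: "short f" and j: "j < n"
  shows "phi f (nx j, [Bw j]) = mu (tau j) * f (tau j, [Fw (tau j)])"
proof -
  have fpa: "f \<in> PA" using f by (simp add: short_def)
  have "phi f (nx j, [Bw j]) = (\<Sum>p\<in>supp f. f p * phi (basis_el p) (nx j, [Bw j]))" by (rule phi_expand[OF fpa])
  also have "\<dots> = (if (tau j, [Fw (tau j)]) \<in> supp f then f (tau j, [Fw (tau j)]) * phi (basis_el (tau j, [Fw (tau j)])) (nx j, [Bw j]) else 0)"
  proof (rule sum_single[OF supp_fin[OF fpa]], intro ballI impI)
    fix p assume p: "p \<in> supp f" "p \<noteq> (tau j, [Fw (tau j)])"
    then have "f p \<noteq> 0" by (simp add: supp_def)
    then have vp: "valid_path n p" "length (snd p) \<le> 1" using short_D[OF f] by blast+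
    from shape_short[OF vp] show "f p * phi (basis_el p) (nx j, [Bw j]) = 0"
    proof (elim disjE exE conjE)
      fix v assume "p = (v, [])" "v < n"
      then show ?thesis by (auto simp: phi_basis_v vtx_val)
    next
      fix i assume pi: "p = (i, [Fw i])" "i < n"
      then have "tau i \<noteq> j" using p j by auto
      then show ?thesis using pi by (simp add: phi_basis_F arr_val)
    next
      fix i assume "p = (nx i, [Bw i])" "i < n"
      then show ?thesis by (simp add: phi_basis_B arr_val)
    qed
  qed
  also have "\<dots> = mu (tau j) * f (tau j, [Fw (tau j)])" using j
    by (auto simp: supp_def phi_basis_F arr_val tau_eq[symmetric])
  finally show ?thesis .
qed

lemma phi_short_F:
  assumes f: "short f" and j: "j < n"
  shows "phi f (j, [Fw j]) = mus (tau j) * f (nx (tau j), [Bw (tau j)])"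
proof -
  have fpa: "f \<in> PA" using f by (simp add: short_def)
  have "phi f (j, [Fw j]) = (\<Sum>p\<in>supp f. f p * phi (basis_el p) (j, [Fw j]))" by (rule phi_expand[OF fpa])
  also have "\<dots> = (if (nx (tau j), [Bw (tau j)]) \<in> supp f then f (nx (tau j), [Bw (tau j)]) * phi (basis_el (nx (tau j), [Bw (tau j)])) (j, [Fw j]) else 0)"
  proof (rule sum_single[OF supp_fin[OF fpa]], intro ballI impI)
    fix p assume p: "p \<in> supp f" "p \<noteq> (nx (tau j), [Bw (tau j)])"
    then have "f p \<noteq> 0" by (simp add: supp_def)
    then have vp: "valid_path n p" "length (snd p) \<le> 1" using short_D[OF f] by blast+
    from shape_short[OF vp] show "f p * phi (basis_el p) (j, [Fw j]) = 0"
    proof (elim disjE exE conjE)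
      fix v assume "p = (v, [])" "v < n"
      then show ?thesis by (auto simp: phi_basis_v vtx_val)
    next
      fix i assume "p = (i, [Fw i])" "i < n"
      then show ?thesis by (simp add: phi_basis_F arr_val)
    next
      fix i assume pi: "p = (nx i, [Bw i])" "i < n"
      then have "tau i \<noteq> j" using p j by auto
      then show ?thesis using pi by (simp add: phi_basis_B arr_val)
    qed
  qed
  also have "\<dots> = mus (tau j) * f (nx (tau j), [Bw (tau j)])" using j
    by (auto simp: supp_def phi_basis_B arr_val)
  finally show ?thesis .
qed

end

definition Jset :: "nat \<Rightarrow> ('k::field) pel set" where
  "Jset n = {f \<in> path_alg n. (\<forall>v. f (v, []) = 0) \<and> (\<forall>v a. f (v, [a]) = 0) \<and>
     (\<forall>v i j. f (v, [Fw i, Fw j]) = 0 \<and> f (v, [Bw i, Bw j]) = 0) \<and>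
     (\<forall>v<n. f (v, [Bw ((v + n - 1) mod n), Fw ((v + n - 1) mod n)]) + f (v, [Fw v, Bw v]) = 0)}"

lemma pv_gen: "0 < n \<Longrightarrow> i < n \<Longrightarrow> (Suc i mod n + n - 1) mod n = i"
proof -
  assume n: "0 < n" and i: "i < n"
  show ?thesis
  proof (cases "Suc i = n")
    case True then show ?thesis using n by simp
  next
    case False
    then have "Suc i mod n = Suc i" using i by simp
    moreover have "(Suc i + n - 1) mod n = (i + n) mod n" by simp
    ultimately show ?thesis using i by simp
  qed
qed

lemma nx_pv_gen: "0 < n \<Longrightarrow> v < n \<Longrightarrow> Suc ((v + n - 1) mod n) mod n = v"
proof -
  assume n: "0 < n" and v: "v < n"
  show ?thesis
  proof (cases "v = 0")
    case True then show ?thesis using n by simp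
  next
    case False
    then have "(v + n - 1) mod n = v - 1" using v
    proof -
      have e: "v + n - 1 = (v - 1) + n" using False by simp
      have "(v - 1) mod n = v - 1" using v by simp
      then show ?thesis unfolding e by simp
    qed
    then show ?thesis using False v by simp
  qed
qed

lemma pmult_len2_left: "f \<in> Jset n \<Longrightarrow> u \<in> path_alg n \<Longrightarrow> pmult n u f (v, [a, b]) = u (v, []) * f (v, [a, b])"
proof -
  assume f: "f \<in> Jset n" and u: "u \<in> path_alg n"
  have fpa: "f \<in> path_alg n" using f by (simp add: Jset_def)
  show ?thesis
  proof (cases "valid_path n (v, [a, b])")
    case True then show ?thesis using f by (simp add: pmult_2 Jset_def)
  next
    case False
    have "pmult n u f (v, [a, b]) = 0" by (simp only: pmult_2 if_not_P[OF False])
    then show ?thesis using pa_invalid[OF fpa False] by simp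
  qed
qed

lemma pmult_len2_right: "f \<in> Jset n \<Longrightarrow> u \<in> path_alg n \<Longrightarrow> pmult n f u (v, [a, b]) = f (v, [a, b]) * u (atgt n b, [])"
proof -
  assume f: "f \<in> Jset n" and u: "u \<in> path_alg n"
  have fpa: "f \<in> path_alg n" using f by (simp add: Jset_def)
  show ?thesis
  proof (cases "valid_path n (v, [a, b])")
    case True then show ?thesis using f by (simp add: pmult_2 Jset_def)
  next
    case False
    have "pmult n f u (v, [a, b]) = 0" by (simp only: pmult_2 if_not_P[OF False])
    then show ?thesis using pa_invalid[OF fpa False] by simp
  qed
qed

lemma Jset_ideal: "0 < n \<Longrightarrow> is_ideal n (Jset n :: ('k::field) pel set)"
  unfolding is_ideal_def
proof (intro conjI ballI allI)
  assume n: "0 < n"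
  show "Jset n \<subseteq> path_alg n" by (auto simp: Jset_def)
  show "pzero \<in> (Jset n :: 'k pel set)" by (simp add: Jset_def)
  fix f h :: "'k pel" assume f: "f \<in> Jset n" and h: "h \<in> Jset n"
  have e: "(a + b) + (c + e) = (a + c) + (b + e)" for a b c e :: 'k by (simp add: algebra_simps)
  show "padd f h \<in> Jset n"
    unfolding Jset_def
  proof (intro CollectI conjI allI impI)
    show "padd f h \<in> path_alg n" using f h by (simp add: Jset_def padd_pa)
    fix v show "padd f h (v, []) = 0" using f h by (simp add: Jset_def)
    fix a show "padd f h (v, [a]) = 0" using f h by (simp add: Jset_def)
  next
    fix v i j
    show "padd f h (v, [Fw i, Fw j]) = 0" "padd f h (v, [Bw i, Bw j]) = 0" using f h by (simp_all add: Jset_def)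
  next
    fix v :: nat assume v: "v < n"
    have a1: "f (v, [Bw ((v + n - 1) mod n), Fw ((v + n - 1) mod n)]) + f (v, [Fw v, Bw v]) = 0"
      using f v unfolding Jset_def by blast
    have a2: "h (v, [Bw ((v + n - 1) mod n), Fw ((v + n - 1) mod n)]) + h (v, [Fw v, Bw v]) = 0"
      using h v unfolding Jset_def by blast
    show "padd f h (v, [Bw ((v + n - 1) mod n), Fw ((v + n - 1) mod n)]) + padd f h (v, [Fw v, Bw v]) = 0"
      unfolding padd_val e a1 a2 by simp
  qed
next
  fix c :: 'k and f :: "'k pel" assume f: "f \<in> Jset n"
  then show "pscale c f \<in> Jset n"
    by (auto simp: Jset_def pscale_pa simp flip: distrib_left)
next
  assume n: "0 < n"
  fix f u :: "'k pel" assume f: "f \<in> Jset n" and u: "u \<in> path_alg n"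
  have fpa: "f \<in> path_alg n" using f by (simp add: Jset_def)
  show "pmult n u f \<in> Jset n"
    unfolding Jset_def
  proof (intro CollectI conjI allI impI)
    show "pmult n u f \<in> path_alg n" using pmult_pa[OF u fpa] .
    fix v show "pmult n u f (v, []) = 0" using f by (simp add: pmult_0 Jset_def)
    fix a show "pmult n u f (v, [a]) = 0" using f by (simp add: pmult_1 Jset_def)
  next
    fix v i j
    show "pmult n u f (v, [Fw i, Fw j]) = 0" "pmult n u f (v, [Bw i, Bw j]) = 0"
      using f u by (simp_all add: pmult_len2_left Jset_def)
  next
    fix v :: nat assume "v < n"
    then show "pmult n u f (v, [Bw ((v + n - 1) mod n), Fw ((v + n - 1) mod n)]) + pmult n u f (v, [Fw v, Bw v]) = 0"
      using f u by (simp add: pmult_len2_left Jset_def flip: distrib_left)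
  qed
  show "pmult n f u \<in> Jset n"
    unfolding Jset_def
  proof (intro CollectI conjI allI impI)
    show "pmult n f u \<in> path_alg n" using pmult_pa[OF fpa u] .
    fix v show "pmult n f u (v, []) = 0" using f by (simp add: pmult_0 Jset_def)
    fix a show "pmult n f u (v, [a]) = 0" using f by (simp add: pmult_1 Jset_def)
  next
    fix v i j
    show "pmult n f u (v, [Fw i, Fw j]) = 0" "pmult n f u (v, [Bw i, Bw j]) = 0"
      using f u by (simp_all add: pmult_len2_right Jset_def)
  next
    fix v :: nat assume v: "v < n"
    have "pmult n f u (v, [Bw ((v + n - 1) mod n), Fw ((v + n - 1) mod n)]) + pmult n f u (v, [Fw v, Bw v])
        = (f (v, [Bw ((v + n - 1) mod n), Fw ((v + n - 1) mod n)]) + f (v, [Fw v, Bw v])) * u (v, [])"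
      using f u nx_pv_gen[OF n v] by (simp add: pmult_len2_right distrib_right)
    then show "pmult n f u (v, [Bw ((v + n - 1) mod n), Fw ((v + n - 1) mod n)]) + pmult n f u (v, [Fw v, Bw v]) = 0"
      using f v by (simp add: Jset_def)
  qed
qed

lemma basis_arr_arr:
  assumes "0 < n" "aidx a < n" "aidx b < n" "asrc n b = atgt n a"
  shows "pmult n (arr n a) (arr n b) = (basis_el (asrc n a, [a, b]) :: ('k::field) pel)"
proof -
  have "valid_path n (asrc n a, [a, b])" using assms asrc_lt by auto
  then have "basis_el (asrc n a, [a, b]) = pmult n (arr n a) (basis_el (atgt n a, [b]))" by (rule basis_cons)
  also have "basis_el (atgt n a, [b]) = (arr n b :: 'k pel)" using assms by (simp add: arr_def)
  finally show ?thesis by simp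
qed

lemma rho_eq:
  assumes n: "0 < n" and i: "i < n"
  shows "(rho n i :: ('k::field) pel) = psub (basis_el (Suc i mod n, [Bw i, Fw i])) (basis_el (Suc i mod n, [Fw (Suc i mod n), Bw (Suc i mod n)]))"
proof -
  have "pmult n (arr n (Bw i)) (arr n (Fw i)) = (basis_el (Suc i mod n, [Bw i, Fw i]) :: 'k pel)"
    using basis_arr_arr[of n "Bw i" "Fw i"] n i by simp
  moreover have "pmult n (arr n (Fw (Suc i mod n))) (arr n (Bw (Suc i mod n))) = (basis_el (Suc i mod n, [Fw (Suc i mod n), Bw (Suc i mod n)]) :: 'k pel)"
    using basis_arr_arr[of n "Fw (Suc i mod n)" "Bw (Suc i mod n)"] n i by simp
  ultimately show ?thesis by (simp add: rho_def)
qed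

lemma rho_J: "0 < n \<Longrightarrow> i < n \<Longrightarrow> rho n i \<in> (Jset n :: ('k::field) pel set)"
proof -
  assume n: "0 < n" and i: "i < n"
  have pa: "rho n i \<in> (path_alg n :: 'k pel set)"
    unfolding rho_eq[OF n i] using n i by (intro psub_pa basis_pa) auto
  show ?thesis unfolding Jset_def
  proof (intro CollectI conjI allI impI pa)
    fix v show "rho n i (v, []) = (0::'k)" by (simp add: rho_eq[OF n i] basis_el_def)
    fix a show "rho n i (v, [a]) = (0::'k)" by (simp add: rho_eq[OF n i] basis_el_def)
  next
    fix v j k
    show "rho n i (v, [Fw j, Fw k]) = (0::'k)" "rho n i (v, [Bw j, Bw k]) = (0::'k)"
      by (simp_all add: rho_eq[OF n i] basis_el_def)
  next
    fix v assume v: "v < n"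
    show "rho n i (v, [Bw ((v + n - 1) mod n), Fw ((v + n - 1) mod n)]) + rho n i (v, [Fw v, Bw v]) = (0::'k)"
    proof (cases "v = Suc i mod n")
      case True
      then show ?thesis using pv_gen[OF n i] by (simp add: rho_eq[OF n i] basis_el_def)
    next
      case False
      then show ?thesis by (simp add: rho_eq[OF n i] basis_el_def)
    qed
  qed
qed

lemma Omega_J: "0 < n \<Longrightarrow> Omega n \<subseteq> (Jset n :: ('k::field) pel set)"
  unfolding Omega_def using Jset_ideal rho_J by blast

lemma rho_Omega: "i < n \<Longrightarrow> rho n i \<in> Omega n"
  unfolding Omega_def by blast

context ctx begin

lemma Om_J: "f \<in> Omega n \<Longrightarrow> f \<in> Jset n" using Omega_J[OF n0] by blast

lemma Om1: assumes "f \<in> Omega n" shows "f (v, [a]) = 0" using Om_J[OF assms] by (simp add: Jset_def)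
lemma OmFF: assumes "f \<in> Omega n" shows "f (v, [Fw i, Fw j]) = 0" using Om_J[OF assms] by (simp add: Jset_def)
lemma OmBB: assumes "f \<in> Omega n" shows "f (v, [Bw i, Bw j]) = 0" using Om_J[OF assms] by (simp add: Jset_def)
lemma Omsum: assumes "f \<in> Omega n" "v < n" shows "f (v, [Bw (pv v), Fw (pv v)]) + f (v, [Fw v, Bw v]) = 0"
  using Om_J[OF assms(1)] assms(2) unfolding Jset_def pv_def by blast

lemma phi_rho_Om: "i < n \<Longrightarrow> phi (rho n i) \<in> Omega n"
  using desc rho_Omega unfolding descends_def by blast
lemma dlt_rho_Om: "i < n \<Longrightarrow> dlt (rho n i) \<in> Omega n"
  using desc rho_Omega unfolding descends_def by blast

abbreviation D where "D v \<equiv> dlt (vtx v)"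
abbreviation X where "X i \<equiv> dlt (arr n (Fw i))"
abbreviation Y where "Y i \<equiv> dlt (arr n (Bw i))"
definition gam where "gam v = D v (v, [])"

lemma two_ne_one: "(2::'a::field) \<noteq> 1"
proof
  assume "(2::'a) = 1"
  then have "(1::'a) + 1 = 1 + 0" by simp
  then show False by (metis add_left_cancel zero_neq_one)
qed

lemma vtx_idem: "v < n \<Longrightarrow> pmult n (vtx v) (vtx v) = (vtx v :: 'k pel)"
  by (rule ext) (auto simp: pmult_vtx_left vtx_val)

lemma vtx_orth: "w \<noteq> v \<Longrightarrow> pmult n (vtx w) (vtx v) = (pzero :: 'k pel)"
  by (rule ext) (auto simp: pmult_vtx_left vtx_val)

lemma D_eq: "v < n \<Longrightarrow> D v = padd (pmult n (vtx v) (D v)) (pmult n (D v) (vtx (sg v)))"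
proof -
  assume v: "v < n"
  have "D v = dlt (pmult n (vtx v) (vtx v))" using vtx_idem[OF v] by simp
  also have "\<dots> = padd (pmult n (vtx v) (D v)) (pmult n (D v) (vtx (sg v)))"
    using v by (simp add: dlt_mult phi_vtx)
  finally show ?thesis .
qed

lemma D_at: "v < n \<Longrightarrow> w < n \<Longrightarrow> D v (w, []) = (if w = v then D v (w, []) else 0) + (if w = sg v then D v (w, []) else 0)"
proof -
  assume v: "v < n" and w: "w < n"
  have "D v (w, []) = padd (pmult n (vtx v) (D v)) (pmult n (D v) (vtx (sg v))) (w, [])"
    using D_eq[OF v] by (rule arg_cong[where f="\<lambda>f. f (w, [])"])
  then show ?thesis using w by (simp add: pmult_vtx_left pmult_vtx_right)
qed

lemma V1: "v < n \<Longrightarrow> w \<noteq> v \<Longrightarrow> w \<noteq> sg v \<Longrightarrow> D v (w, []) = 0"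
proof -
  assume v: "v < n" and a: "w \<noteq> v" "w \<noteq> sg v"
  show ?thesis
  proof (cases "w < n")
    case True then show ?thesis using D_at[OF v True] a by simp
  next
    case False
    then have "\<not> valid_path n (w, [])" by simp
    then show ?thesis using pa_invalid[OF dlt_pa[OF vtx_pa'[OF v]]] by blast
  qed
qed

lemma V0: "v < n \<Longrightarrow> sg v = v \<Longrightarrow> D v (w, []) = 0"
proof -
  assume v: "v < n" and s: "sg v = v"
  show ?thesis
  proof (cases "w = v")
    case True
    have h: "D v (v, []) = (if v = v then D v (v, []) else 0) + (if v = sg v then D v (v, []) else 0)"
      by (rule D_at[OF v v])
    have e1: "(if v = v then D v (v, []) else 0) = D v (v, [])" by simp
    have e2: "(if v = sg v then D v (v, []) else 0) = D v (v, [])" using s by simp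
    have "D v (v, []) = D v (v, []) + D v (v, [])" using h e1 e2 by metis
    then show ?thesis using True by (metis add_cancel_right_right)
  next
    case False then show ?thesis using V1[OF v] s by simp
  qed
qed

lemma gam_fixed: "v < n \<Longrightarrow> sg v = v \<Longrightarrow> gam v = 0"
  by (simp add: gam_def V0)

lemma V2: "v < n \<Longrightarrow> D v (sg v, []) = - gam (sg v)"
proof -
  assume v: "v < n"
  show ?thesis
  proof (cases "sg v = v")
    case True then show ?thesis using V0[OF v True] gam_fixed[OF v True] by simp
  next
    case False
    have "pzero = dlt (pmult n (vtx (sg v)) (vtx v))" using vtx_orth[OF False] by simp
    also have "\<dots> = padd (pmult n (vtx (sg v)) (D v)) (pmult n (D (sg v)) (vtx (sg v)))"
      using v by (simp add: dlt_mult phi_vtx)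
    finally have "pzero (sg v, []) = padd (pmult n (vtx (sg v)) (D v)) (pmult n (D (sg v)) (vtx (sg v))) (sg v, [])"
      by simp
    then show ?thesis by (simp add: pmult_vtx_left pmult_vtx_right gam_def eq_neg_iff_add_eq_0)
  qed
qed

lemma D_form: "v < n \<Longrightarrow> D v p = (if p = (v, []) then gam v else 0) - (if p = (sg v, []) then gam (sg v) else 0)"
proof -
  assume v: "v < n"
  obtain w l where p: "p = (w, l)" by (cases p)
  show ?thesis
  proof (cases l)
    case (Cons a l')
    then show ?thesis using p dlt_vtx_nil[OF v] by simp
  next
    case Nil
    show ?thesis
    proof (cases "sg v = v")
      case True
      then show ?thesis using V0[OF v True] gam_fixed[OF v True] p Nil by simp
    next
      case False
      then show ?thesis using V1[OF v] V2[OF v] p Nil by (auto simp: gam_def)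
    qed
  qed
qed

lemma V3: "v < n \<Longrightarrow> gam (sg v) = q * gam v"
proof -
  assume v: "v < n"
  have "phi (D v) = pscale q (dlt (phi (vtx v)))" using comm v by simp
  then have "phi (D v) (v, []) = q * D (sg v) (v, [])" using v by (simp add: phi_vtx)
  moreover have "phi (D v) (v, []) = D v (sg v, [])" using phi_short_v[OF dlt_vtx_short[OF v] v] .
  ultimately have "D v (sg v, []) = q * D (sg v) (v, [])" by simp
  moreover have "D (sg v) (v, []) = - gam v" using V2[of "sg v"] v by simp
  ultimately show ?thesis using V2[OF v] by simp
qed

lemma V4: "v < n \<Longrightarrow> gam v = q * q * gam v"
  using V3[of v] V3[of "sg v"] by simp

end

context ctx begin

lemma arrF_vl: "i < n \<Longrightarrow> pmult n (vtx i) (arr n (Fw i)) = (arr n (Fw i) :: 'k pel)"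
  by (rule ext) (auto simp: pmult_vtx_left arr_val)
lemma arrF_vr: "i < n \<Longrightarrow> pmult n (arr n (Fw i)) (vtx (nx i)) = (arr n (Fw i) :: 'k pel)"
  by (rule ext) (auto simp: pmult_vtx_right arr_val)
lemma arrB_vl: "i < n \<Longrightarrow> pmult n (vtx (nx i)) (arr n (Bw i)) = (arr n (Bw i) :: 'k pel)"
  by (rule ext) (auto simp: pmult_vtx_left arr_val)
lemma arrB_vr: "i < n \<Longrightarrow> pmult n (arr n (Bw i)) (vtx i) = (arr n (Bw i) :: 'k pel)"
  by (rule ext) (auto simp: pmult_vtx_right arr_val)

lemma X_D1: "i < n \<Longrightarrow> X i = padd (pmult n (vtx i) (X i)) (pmult n (D i) (pscale (mu i) (arr n (Bw (tau i)))))"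
proof -
  assume i: "i < n"
  have "X i = dlt (pmult n (vtx i) (arr n (Fw i)))" using arrF_vl[OF i] by simp
  then show ?thesis using i by (simp add: dlt_mult phi_F)
qed

lemma X_D2: "i < n \<Longrightarrow> X i = padd (pmult n (arr n (Fw i)) (D (nx i))) (pmult n (X i) (vtx (sg (nx i))))"
proof -
  assume i: "i < n"
  have "X i = dlt (pmult n (arr n (Fw i)) (vtx (nx i)))" using arrF_vr[OF i] by simp
  then show ?thesis using i by (simp add: dlt_mult phi_vtx)
qed

lemma Y_D1: "i < n \<Longrightarrow> Y i = padd (pmult n (vtx (nx i)) (Y i)) (pmult n (D (nx i)) (pscale (mus i) (arr n (Fw (tau i)))))"
proof -
  assume i: "i < n"
  have "Y i = dlt (pmult n (vtx (nx i)) (arr n (Bw i)))" using arrB_vl[OF i] by simp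
  then show ?thesis using i by (simp add: dlt_mult phi_B)
qed

lemma Y_D2: "i < n \<Longrightarrow> Y i = padd (pmult n (arr n (Bw i)) (D i)) (pmult n (Y i) (vtx (sg i)))"
proof -
  assume i: "i < n"
  have "Y i = dlt (pmult n (arr n (Bw i)) (vtx i))" using arrB_vr[OF i] by simp
  then show ?thesis using i by (simp add: dlt_mult phi_vtx)
qed

lemma at: "f = g \<Longrightarrow> f p = g p" by simp

lemma XD1_0: "i < n \<Longrightarrow> X i (w, []) = (if w = i then X i (w, []) else 0)"
proof -
  assume i: "i < n"
  have "X i (w, []) = padd (pmult n (vtx i) (X i)) (pmult n (D i) (pscale (mu i) (arr n (Bw (tau i))))) (w, [])" by (rule at[OF X_D1[OF i]])
  also have "\<dots> = (if w = i then X i (w, []) else 0)" using i by (simp add: pmult_0 vtx_val arr_val)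
  finally show ?thesis .
qed

lemma XD2_0: "i < n \<Longrightarrow> X i (w, []) = (if w = sg (nx i) then X i (w, []) else 0)"
proof -
  assume i: "i < n"
  have "X i (w, []) = padd (pmult n (arr n (Fw i)) (D (nx i))) (pmult n (X i) (vtx (sg (nx i)))) (w, [])" by (rule at[OF X_D2[OF i]])
  also have "\<dots> = (if w = sg (nx i) then X i (w, []) else 0)" using i by (simp add: pmult_0 vtx_val arr_val)
  finally show ?thesis .
qed

lemma YD1_0: "i < n \<Longrightarrow> Y i (w, []) = (if w = nx i then Y i (w, []) else 0)"
proof -
  assume i: "i < n"
  have "Y i (w, []) = padd (pmult n (vtx (nx i)) (Y i)) (pmult n (D (nx i)) (pscale (mus i) (arr n (Fw (tau i))))) (w, [])" by (rule at[OF Y_D1[OF i]])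
  also have "\<dots> = (if w = nx i then Y i (w, []) else 0)" using i by (simp add: pmult_0 vtx_val arr_val)
  finally show ?thesis .
qed

lemma YD2_0: "i < n \<Longrightarrow> Y i (w, []) = (if w = sg i then Y i (w, []) else 0)"
proof -
  assume i: "i < n"
  have "Y i (w, []) = padd (pmult n (arr n (Bw i)) (D i)) (pmult n (Y i) (vtx (sg i))) (w, [])" by (rule at[OF Y_D2[OF i]])
  also have "\<dots> = (if w = sg i then Y i (w, []) else 0)" using i by (simp add: pmult_0 vtx_val arr_val)
  finally show ?thesis .
qed

lemma XD1_1: "i < n \<Longrightarrow> valid_path n (w, [b]) \<Longrightarrow>
   X i (w, [b]) = (if w = i then X i (w, [b]) else 0) + D i (w, []) * (mu i * (if w = sg i \<and> b = Bw (tau i) then 1 else 0))"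
proof -
  assume i: "i < n" and v: "valid_path n (w, [b])"
  have "X i (w, [b]) = padd (pmult n (vtx i) (X i)) (pmult n (D i) (pscale (mu i) (arr n (Bw (tau i))))) (w, [b])"
    by (rule at[OF X_D1[OF i]])
  also have "\<dots> = (if w = i then X i (w, [b]) else 0) + D i (w, []) * (mu i * (if w = sg i \<and> b = Bw (tau i) then 1 else 0))"
    using v i by (simp add: vtx_val pmult_1 arr_val sg_eq dlt_vtx_nil del: valid_one)
  finally show ?thesis .
qed

lemma XD2_1: "i < n \<Longrightarrow> valid_path n (w, [b]) \<Longrightarrow>
   X i (w, [b]) = (if w = i \<and> b = Fw i then gam (nx i) else 0) + (if atgt n b = sg (nx i) then X i (w, [b]) else 0)"
proof -
  assume i: "i < n" and v: "valid_path n (w, [b])"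
  have "X i (w, [b]) = padd (pmult n (arr n (Fw i)) (D (nx i))) (pmult n (X i) (vtx (sg (nx i)))) (w, [b])"
    by (rule at[OF X_D2[OF i]])
  also have "\<dots> = (if w = i \<and> b = Fw i then gam (nx i) else 0) + (if atgt n b = sg (nx i) then X i (w, [b]) else 0)"
    using v i by (auto simp: pmult_vtx_right pmult_1 arr_val gam_def vtx_val dlt_vtx_nil simp del: valid_one)
  finally show ?thesis .
qed

lemma YD1_1: "i < n \<Longrightarrow> valid_path n (w, [b]) \<Longrightarrow>
   Y i (w, [b]) = (if w = nx i then Y i (w, [b]) else 0) + D (nx i) (w, []) * (mus i * (if w = tau i \<and> b = Fw (tau i) then 1 else 0))"
proof -
  assume i: "i < n" and v: "valid_path n (w, [b])"
  have "Y i (w, [b]) = padd (pmult n (vtx (nx i)) (Y i)) (pmult n (D (nx i)) (pscale (mus i) (arr n (Fw (tau i))))) (w, [b])"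
    by (rule at[OF Y_D1[OF i]])
  also have "\<dots> = (if w = nx i then Y i (w, [b]) else 0) + D (nx i) (w, []) * (mus i * (if w = tau i \<and> b = Fw (tau i) then 1 else 0))"
    using v i by (simp add: vtx_val pmult_1 arr_val dlt_vtx_nil del: valid_one)
  finally show ?thesis .
qed

lemma YD2_1: "i < n \<Longrightarrow> valid_path n (w, [b]) \<Longrightarrow>
   Y i (w, [b]) = (if w = nx i \<and> b = Bw i then gam i else 0) + (if atgt n b = sg i then Y i (w, [b]) else 0)"
proof -
  assume i: "i < n" and v: "valid_path n (w, [b])"
  have "Y i (w, [b]) = padd (pmult n (arr n (Bw i)) (D i)) (pmult n (Y i) (vtx (sg i))) (w, [b])"
    by (rule at[OF Y_D2[OF i]])
  also have "\<dots> = (if w = nx i \<and> b = Bw i then gam i else 0) + (if atgt n b = sg i then Y i (w, [b]) else 0)"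
    using v i by (auto simp: pmult_vtx_right pmult_1 arr_val gam_def vtx_val dlt_vtx_nil simp del: valid_one)
  finally show ?thesis .
qed

definition freeF :: "nat \<Rightarrow> path \<Rightarrow> bool" where
  "freeF i p \<longleftrightarrow> (p = (i, []) \<and> sg (nx i) = i) \<or>
     (\<exists>b. p = (i, [b]) \<and> aidx b < n \<and> asrc n b = i \<and> atgt n b = sg (nx i))"

definition freeB :: "nat \<Rightarrow> path \<Rightarrow> bool" where
  "freeB i p \<longleftrightarrow> (p = (nx i, []) \<and> sg i = nx i) \<or>
     (\<exists>b. p = (nx i, [b]) \<and> aidx b < n \<and> asrc n b = nx i \<and> atgt n b = sg i)"

lemma path_cases:
  obtains (inv) "\<not> valid_path n p" | (nil) w where "p = (w, [])" "w < n"
  | (one) w b where "p = (w, [b])" "valid_path n (w, [b])" | (long) w a b l where "p = (w, a # b # l)"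
proof -
  obtain w l where p: "p = (w, l)" by (cases p)
  show ?thesis
  proof (cases "valid_path n p")
    case False then show ?thesis using that(1) by blast
  next
    case True
    show ?thesis
    proof (cases l)
      case Nil then show ?thesis using that(2) p True by simp
    next
      case (Cons a l')
      show ?thesis
      proof (cases l')
        case Nil then show ?thesis using that(3) p True Cons by simp
      next
        case (Cons b l'') then show ?thesis using that(4) p \<open>l = a # l'\<close> by simp
      qed
    qed
  qed
qed

lemma X_struct:
  assumes i: "i < n" and nf: "\<not> freeF i p"
  shows "X i p = (if p = (i, [Fw i]) then gam (nx i) else 0) - (if p = (sg i, [Bw (tau i)]) then gam (sg i) * mu i else 0)"
proof (cases p rule: path_cases)
  case inv
  have "X i p = 0" using pa_invalid[OF dlt_pa[OF arrF_pa[OF i]] inv] .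
  moreover have "valid_path n (i, [Fw i])" "valid_path n (sg i, [Bw (tau i)])" using i by (auto simp: sg_eq)
  ultimately show ?thesis using inv by auto
next
  case (long w a b l)
  then show ?thesis using dlt_arr_short[of "Fw i"] i by simp
next
  case (nil w)
  have "X i (w, []) = 0"
  proof (cases "w = i \<and> w = sg (nx i)")
    case True then have "freeF i p" using nil by (simp add: freeF_def)
    then show ?thesis using nf by simp
  next
    case False
    then consider "w \<noteq> i" | "w \<noteq> sg (nx i)" by blast
    then show ?thesis
    proof cases
      case 1 then have "(if w = i then X i (w, []) else 0) = 0" by simp
      then show ?thesis by (rule trans[OF XD1_0[OF i]])
    next
      case 2 then have "(if w = sg (nx i) then X i (w, []) else 0) = 0" by simp
      then show ?thesis by (rule trans[OF XD2_0[OF i]])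
    qed
  qed
  then show ?thesis using nil by simp
next
  case (one w b)
  show ?thesis
  proof (cases "w = i")
    case False
    have "X i (w, [b]) = D i (w, []) * (mu i * (if w = sg i \<and> b = Bw (tau i) then 1 else 0))"
      using XD1_1[OF i one(2)] False by simp
    also have "\<dots> = - (if w = sg i \<and> b = Bw (tau i) then gam (sg i) * mu i else 0)"
      using D_form[OF i, of "(w, [])"] False by auto
    finally show ?thesis using one False by auto
  next
    case True
    have "atgt n b \<noteq> sg (nx i)" using nf one True by (auto simp: freeF_def)
    then have "X i (w, [b]) = (if w = i \<and> b = Fw i then gam (nx i) else 0)"
      using XD2_1[OF i one(2)] by simp
    moreover have "i = sg i \<Longrightarrow> gam (sg i) = 0" using gam_fixed[OF i] by simp
    ultimately show ?thesis using one True by auto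
  qed
qed

lemma Y_struct:
  assumes i: "i < n" and nf: "\<not> freeB i p"
  shows "Y i p = (if p = (nx i, [Bw i]) then gam i else 0) - (if p = (tau i, [Fw (tau i)]) then gam (tau i) * mus i else 0)"
proof (cases p rule: path_cases)
  case inv
  have "Y i p = 0" using pa_invalid[OF dlt_pa[OF arrB_pa[OF i]] inv] .
  moreover have "valid_path n (nx i, [Bw i])" "valid_path n (tau i, [Fw (tau i)])" using i by auto
  ultimately show ?thesis using inv by auto
next
  case (long w a b l)
  then show ?thesis using dlt_arr_short[of "Bw i"] i by simp
next
  case (nil w)
  have "Y i (w, []) = 0"
  proof (cases "w = nx i \<and> w = sg i")
    case True then have "freeB i p" using nil by (simp add: freeB_def)
    then show ?thesis using nf by simp
  next
    case False
    then consider "w \<noteq> nx i" | "w \<noteq> sg i" by blast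
    then show ?thesis
    proof cases
      case 1 then have "(if w = nx i then Y i (w, []) else 0) = 0" by simp
      then show ?thesis by (rule trans[OF YD1_0[OF i]])
    next
      case 2 then have "(if w = sg i then Y i (w, []) else 0) = 0" by simp
      then show ?thesis by (rule trans[OF YD2_0[OF i]])
    qed
  qed
  then show ?thesis using nil by simp
next
  case (one w b)
  show ?thesis
  proof (cases "w = nx i")
    case False
    have "Y i (w, [b]) = D (nx i) (w, []) * (mus i * (if w = tau i \<and> b = Fw (tau i) then 1 else 0))"
      using YD1_1[OF i one(2)] False by simp
    also have "\<dots> = - (if w = tau i \<and> b = Fw (tau i) then gam (tau i) * mus i else 0)"
      using D_form[OF nx_lt, of i "(w, [])"] False i by (auto simp: tau_eq)
    finally show ?thesis using one False by auto
  next
    case True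
    have "atgt n b \<noteq> sg i" using nf one True by (auto simp: freeB_def)
    then have "Y i (w, [b]) = (if w = nx i \<and> b = Bw i then gam i else 0)"
      using YD2_1[OF i one(2)] by simp
    moreover have "nx i = tau i \<Longrightarrow> gam (tau i) = 0" using gam_fixed[OF nx_lt, of i] i by (simp add: tau_eq)
    ultimately show ?thesis using one True by auto
  qed
qed

end

context ctx begin

lemma q_ne_1: "q \<noteq> 1"
  using prim r1 unfolding primitive_root_def by (metis power_one_right zero_less_one)

lemma rho_pa: "i < n \<Longrightarrow> rho n i \<in> PA"
  unfolding rho_def by (intro psub_pa pmult_pa) simp_all

lemma dlt_rho_eq: "i < n \<Longrightarrow> dlt (rho n i) =
  psub (padd (pmult n (arr n (Bw i)) (X i)) (pmult n (Y i) (pscale (mu i) (arr n (Bw (tau i))))))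
       (padd (pmult n (arr n (Fw (nx i))) (Y (nx i))) (pmult n (X (nx i)) (pscale (mus (nx i)) (arr n (Fw (tau (nx i)))))))"
  unfolding rho_def by (simp add: dlt_sub pmult_pa dlt_mult phi_F phi_B)

lemma phi_rho_eq: "i < n \<Longrightarrow> phi (rho n i) =
  psub (pscale (mus i * mu i) (basis_el (tau i, [Fw (tau i), Bw (tau i)])))
       (pscale (mu (nx i) * mus (nx i)) (basis_el (tau i, [Bw (pv (tau i)), Fw (pv (tau i))])))"
proof -
  assume i: "i < n"
  have a: "pmult n (arr n (Fw (tau i))) (arr n (Bw (tau i))) = (basis_el (tau i, [Fw (tau i), Bw (tau i)]) :: 'k pel)"
    using basis_arr_arr[OF n0, of "Fw (tau i)" "Bw (tau i)"] by simp
  have b: "pmult n (arr n (Bw (pv (tau i)))) (arr n (Fw (pv (tau i)))) = (basis_el (tau i, [Bw (pv (tau i)), Fw (pv (tau i))]) :: 'k pel)"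
    using basis_arr_arr[OF n0, of "Bw (pv (tau i))" "Fw (pv (tau i))"] by simp
  show ?thesis using i unfolding rho_def
    by (simp add: phi_sub pmult_pa phi_mult phi_F phi_B pmult_scale_l pmult_scale_r tau_nx a b fun_eq_iff mult_ac)
qed

lemma c_step: "i < n \<Longrightarrow> mu i * mus i = mu (nx i) * mus (nx i)"
proof -
  assume i: "i < n"
  have "phi (rho n i) (tau i, [Bw (pv (tau i)), Fw (pv (tau i))]) + phi (rho n i) (tau i, [Fw (tau i), Bw (tau i)]) = 0"
    by (rule Omsum[OF phi_rho_Om[OF i] tau_lt])
  then show ?thesis using i by (simp add: phi_rho_eq basis_el_def mult.commute)
qed

lemma c_const: "i < n \<Longrightarrow> mu i * mus i = mu 0 * mus 0"
proof (induction i)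
  case 0 then show ?case by simp
next
  case (Suc i)
  then have "mu i * mus i = mu (nx i) * mus (nx i)" by (intro c_step) simp
  moreover have "nx i = Suc i" using Suc.prems by simp
  ultimately show ?case using Suc by simp
qed

lemma c_eq: "i < n \<Longrightarrow> j < n \<Longrightarrow> mu i * mus i = mu j * mus j"
  using c_const by metis

lemma typeV:
  assumes i: "i < n" and tv: "sg (nx i) = i" and nz: "X i (i, []) \<noteq> 0 \<or> Y i (nx i, []) \<noteq> 0"
  shows "q = -1 \<and> mu i * mus i = 1"
proof -
  define lam where "lam = X i (i, [])"
  define nu where "nu = Y i (nx i, [])"
  have ti: "tau i = i" using typeV_tau[OF i tv] .
  have si: "sg i = nx i" using typeV_sg[OF i tv] .
  have E1: "lam = q * (mu i * nu)"
  proof -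
    have "phi (X i) = pscale q (dlt (phi (arr n (Fw i))))" using comm i by simp
    then have "phi (X i) (nx i, []) = q * (mu i * Y i (nx i, []))"
      using i ti by (simp add: phi_F dlt_sc')
    moreover have "phi (X i) (nx i, []) = X i (i, [])"
      using phi_short_v[OF dlt_arr_short nx_lt, of "Fw i" i] i tv by simp
    ultimately show ?thesis by (simp add: lam_def nu_def)
  qed
  have E2: "nu = q * (mus i * lam)"
  proof -
    have "phi (Y i) = pscale q (dlt (phi (arr n (Bw i))))" using comm i by simp
    then have "phi (Y i) (i, []) = q * (mus i * X i (i, []))"
      using i ti by (simp add: phi_B dlt_sc')
    moreover have "phi (Y i) (i, []) = Y i (nx i, [])"
      using phi_short_v[OF dlt_arr_short i, of "Bw i"] i si by simp
    ultimately show ?thesis by (simp add: lam_def nu_def)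
  qed
  have E3: "lam + mu i * nu = 0"
  proof -
    have "dlt (rho n i) (nx i, [Bw i]) = 0" by (rule Om1[OF dlt_rho_Om[OF i]])
    then show ?thesis using i ti
      by (simp add: dlt_rho_eq pmult_1 arr_val vtx_val lam_def nu_def mult.commute)
  qed
  have nu0: "nu \<noteq> 0"
  proof
    assume "nu = 0"
    then have "lam = 0" using E3 by simp
    then show False using nz \<open>nu = 0\<close> by (simp add: lam_def nu_def)
  qed
  have "(q + 1) * (mu i * nu) = 0" using E1 E3 by (simp add: algebra_simps)
  then have q: "q = -1" using nu0 mu_nz[OF i] by (simp add: eq_neg_iff_add_eq_0)
  have l: "lam = - (mu i * nu)" using E1 q by simp
  have "nu = - (mus i * lam)" using E2 q by simp
  then have "nu = mus i * mu i * nu" using l by simp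
  then have "mus i * mu i = 1" using nu0 by (metis mult_cancel_right2)
  then show ?thesis using q by (simp add: mult.commute)
qed

lemma fixedV:
  assumes k: "k < n" and fx: "sg k = k"
    and nz: "X (pv k) (pv k, [Fw (pv k)]) \<noteq> 0 \<or> Y (pv k) (k, [Fw k]) \<noteq> 0 \<or>
             X k (k, [Bw (pv k)]) \<noteq> 0 \<or> Y k (nx k, [Bw k]) \<noteq> 0"
  shows "q = -1 \<and> mu k * mus k = 1"
proof -
  define km where "km = pv k"
  have km: "km < n" by (simp add: km_def)
  have nkm: "nx km = k" using k by (simp add: km_def)
  have tk: "tau k = km" using fixed_tau[OF k fx] by (simp add: km_def)
  have tkm: "tau km = k" using fixed_tau_pv[OF k fx] by (simp add: km_def)
  define p where "p = X km (km, [Fw km])"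
  define p' where "p' = Y km (k, [Fw k])"
  define s where "s = X k (k, [Bw km])"
  define s' where "s' = Y k (nx k, [Bw k])"
  have C1: "p = q * s'"
  proof -
    have "phi (X km) = pscale q (dlt (phi (arr n (Fw km))))" using comm km by simp
    then have "phi (X km) (nx k, [Bw k]) = q * (mu km * Y k (nx k, [Bw k]))"
      using km k tkm by (simp add: phi_F dlt_sc')
    moreover have "phi (X km) (nx k, [Bw k]) = mu km * X km (km, [Fw km])"
      using phi_short_B[OF dlt_arr_short k, of "Fw km"] km tk by simp
    ultimately have "mu km * p = mu km * (q * s')" by (simp add: p_def s'_def)
    then show ?thesis using mu_nz[OF km] by simp
  qed
  have C2: "s' = q * p"
  proof -
    have "phi (Y k) = pscale q (dlt (phi (arr n (Bw k))))" using comm k by simp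
    then have "phi (Y k) (km, [Fw km]) = q * (mus k * X km (km, [Fw km]))"
      using k km tk by (simp add: phi_B dlt_sc')
    moreover have "phi (Y k) (km, [Fw km]) = mus k * Y k (nx k, [Bw k])"
      using phi_short_F[OF dlt_arr_short km, of "Bw k"] k tkm by simp
    ultimately have "mus k * s' = mus k * (q * p)" by (simp add: p_def s'_def)
    then show ?thesis using mus_nz[OF k] by simp
  qed
  have C3: "p' + mus km * p = 0"
  proof -
    have "dlt (rho n (pv km)) (km, [Fw km, Fw k]) = 0" by (rule OmFF[OF dlt_rho_Om[OF pv_lt]])
    moreover have "nx (pv km) = km" using km by simp
    ultimately show ?thesis using km k nkm tkm dlt_arr_short[of "Fw km"] dlt_arr_short[of "Bw (pv km)"]
      by (simp add: dlt_rho_eq pmult_2 arr_val p_def p'_def mult.commute neg_eq_iff_add_eq_0)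
  qed
  have C4: "s + mu k * s' = 0"
  proof -
    have "dlt (rho n k) (nx k, [Bw k, Bw km]) = 0" by (rule OmBB[OF dlt_rho_Om[OF k]])
    then show ?thesis using km k nkm tk dlt_arr_short[of "Bw k"] dlt_arr_short[of "Fw (nx k)"]
      by (simp add: dlt_rho_eq pmult_2 arr_val s_def s'_def mult.commute)
  qed
  have C5: "(p - mus k * s) + (mu km * p' - s') = 0"
  proof -
    have "dlt (rho n km) (k, [Bw (pv k), Fw (pv k)]) + dlt (rho n km) (k, [Fw k, Bw k]) = 0"
      by (rule Omsum[OF dlt_rho_Om[OF km] k])
    then show ?thesis using km k nkm tk tkm dlt_arr_short[of "Bw km"] dlt_arr_short[of "Fw k"]
      by (simp add: dlt_rho_eq pmult_2 arr_val p_def p'_def s_def s'_def km_def[symmetric] mult.commute)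
  qed
  have cc: "mu km * mus km = mu k * mus k" using c_eq[OF km k] .
  have pz: "p \<noteq> 0"
  proof
    assume "p = 0"
    then have "s' = 0" "p' = 0" "s = 0" using C2 C3 C4 by simp_all
    then show False using nz \<open>p = 0\<close> by (simp add: p_def p'_def s_def s'_def km_def)
  qed
  have "p = q * q * p" using C1 C2 by simp
  then have "q * q = 1" using pz by (metis mult_cancel_right2)
  then have "(q - 1) * (q + 1) = 0" by (simp add: algebra_simps)
  then have q: "q = -1" using q_ne_1 by (simp add: eq_neg_iff_add_eq_0)
  have two: "(2::'k) \<noteq> 0"
  proof
    assume "(2::'k) = 0"
    then have "(1::'k) = -1" by (metis add_eq_0_iff one_add_one)
    then show False using q q_ne_1 by simp
  qed
  have s'p: "s' = - p" using C2 q by simp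
  have p'v: "p' = - (mus km * p)" using C3 by (simp add: eq_neg_iff_add_eq_0)
  have sv: "s = - (mu k * s')" using C4 by (simp add: eq_neg_iff_add_eq_0)
  have "(p - mus k * s) + (mu km * p' - s') = 2 * p * (1 - mu k * mus k)"
    using cc unfolding s'p p'v sv by (simp add: algebra_simps)
  then have "2 * p * (1 - mu k * mus k) = 0" using C5 by simp
  then have "mu k * mus k = 1" using two pz by simp
  then show ?thesis using q by simp
qed

end

context ctx begin

lemma all_c: "i < n \<Longrightarrow> mu i * mus i = 1 \<Longrightarrow> \<forall>j<n. mu j * mus j = 1"
  using c_eq by metis

lemma freeF_nz:
  assumes i: "i < n" and fr: "freeF i p" and nz: "X i p \<noteq> 0"
  shows "q = -1 \<and> (\<forall>j<n. mu j * mus j = 1)"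
proof -
  from fr consider (v) "p = (i, [])" "sg (nx i) = i"
    | (a) b where "p = (i, [b])" "aidx b < n" "asrc n b = i" "atgt n b = sg (nx i)"
    unfolding freeF_def by blast
  then show ?thesis
  proof cases
    case v
    then show ?thesis using typeV[OF i v(2)] nz all_c[OF i] by auto
  next
    case (a b)
    show ?thesis
    proof (cases b)
      case (Fw j)
      then have j: "j = i" using a by simp
      have fx: "sg (nx i) = nx i" using a Fw j by simp
      have "X (pv (nx i)) (pv (nx i), [Fw (pv (nx i))]) \<noteq> 0" using nz a Fw j i by simp
      then show ?thesis using fixedV[OF nx_lt fx] all_c[OF nx_lt] by blast
    next
      case (Bw j)
      then have j: "j = pv i" using a i nx_eq_pv[of i j] by simp
      then have "sg (nx i) = pv i" using a Bw by simp
      then have fx: "sg i = i" by (rule fixA[OF i])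
      have "X i (i, [Bw (pv i)]) \<noteq> 0" using nz a Bw j by simp
      then show ?thesis using fixedV[OF i fx] all_c[OF i] by blast
    qed
  qed
qed

lemma freeB_nz:
  assumes i: "i < n" and fr: "freeB i p" and nz: "Y i p \<noteq> 0"
  shows "q = -1 \<and> (\<forall>j<n. mu j * mus j = 1)"
proof -
  from fr consider (v) "p = (nx i, [])" "sg i = nx i"
    | (a) b where "p = (nx i, [b])" "aidx b < n" "asrc n b = nx i" "atgt n b = sg i"
    unfolding freeB_def by blast
  then show ?thesis
  proof cases
    case v
    then have tv: "sg (nx i) = i" using sg_sg[OF i] by metis
    then show ?thesis using typeV[OF i tv] nz v all_c[OF i] by auto
  next
    case (a b)
    show ?thesis
    proof (cases b)
      case (Fw j)
      then have j: "j = nx i" using a by simp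
      have "nx (nx i) = sg i" using a Fw j by simp
      then have fx: "sg (nx i) = nx i" by (rule fixB[OF i])
      have "Y (pv (nx i)) (nx i, [Fw (nx i)]) \<noteq> 0" using nz a Fw j i by simp
      then show ?thesis using fixedV[OF nx_lt fx] all_c[OF nx_lt] by blast
    next
      case (Bw j)
      then have j: "j = i" using a i nx_inj[of i j] by simp
      then have fx: "sg i = i" using a Bw by simp
      have "Y i (nx i, [Bw i]) \<noteq> 0" using nz a Bw j by simp
      then show ?thesis using fixedV[OF i fx] all_c[OF i] by blast
    qed
  qed
qed

definition XF where "XF i = padd (pscale (gam (nx i)) (arr n (Fw i))) (pscale (- (gam (sg i) * mu i)) (arr n (Bw (tau i))))"
definition YF where "YF i = padd (pscale (gam i) (arr n (Bw i))) (pscale (- (gam (tau i) * mus i)) (arr n (Fw (tau i))))"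

lemma arr_val': "arr n a p = (if p = (asrc n a, [a]) then 1 else 0)"
  by (cases p) (simp add: arr_val)

lemma X_eq:
  assumes i: "i < n" and hz: "\<forall>p. freeF i p \<longrightarrow> X i p = 0"
  shows "X i = XF i"
proof
  fix p
  show "X i p = XF i p"
  proof (cases "freeF i p")
    case False
    then show ?thesis using X_struct[OF i False] i by (simp add: XF_def arr_val' sg_eq)
  next
    case True
    have "XF i p = 0"
    proof -
      have "p = (i, [Fw i]) \<Longrightarrow> gam (nx i) = 0"
        using True gam_fixed[OF nx_lt, of i] by (auto simp: freeF_def)
      moreover have "p = (sg i, [Bw (tau i)]) \<Longrightarrow> gam (sg i) = 0"
        using True gam_fixed[OF i] by (auto simp: freeF_def)
      ultimately show ?thesis using i by (auto simp: XF_def arr_val' sg_eq)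
    qed
    then show ?thesis using hz[rule_format, OF True] by simp
  qed
qed

lemma Y_eq:
  assumes i: "i < n" and hz: "\<forall>p. freeB i p \<longrightarrow> Y i p = 0"
  shows "Y i = YF i"
proof
  fix p
  show "Y i p = YF i p"
  proof (cases "freeB i p")
    case False
    then show ?thesis using Y_struct[OF i False] i by (simp add: YF_def arr_val' sg_eq)
  next
    case True
    have "YF i p = 0"
    proof -
      have "p = (nx i, [Bw i]) \<Longrightarrow> gam i = 0"
        using True gam_fixed[OF i] by (auto simp: freeB_def)
      moreover have "p = (tau i, [Fw (tau i)]) \<Longrightarrow> gam (tau i) = 0"
        using True gam_fixed[OF nx_lt, of i] i by (auto simp: freeB_def tau_eq)
      ultimately show ?thesis using i by (auto simp: YF_def arr_val' sg_eq)
    qed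
    then show ?thesis using hz[rule_format, OF True] by simp
  qed
qed

lemma r2: "q = -1 \<Longrightarrow> r = 2"
proof (rule ccontr)
  assume q: "q = -1" and ne: "r \<noteq> 2"
  then have "r > 2" using r1 by simp
  then have "q ^ 2 \<noteq> 1" using prim unfolding primitive_root_def by simp
  then show False using q by simp
qed

lemma dlt2: "r = 2 \<Longrightarrow> f \<in> PA \<Longrightarrow> dlt (dlt f) = pzero"
  using dlt_nil[of f] by (simp add: numeral_2_eq_2)

lemma xsq:
  assumes q: "q = -1" and i: "i < n" and hzX: "\<forall>p. freeF i p \<longrightarrow> X i p = 0"
    and hzY: "\<forall>p. freeB (tau i) p \<longrightarrow> Y (tau i) p = 0"
  shows "gam (nx i) * gam (nx i) = gam i * gam i * (mu i * mus (tau i))"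
proof -
  have r: "r = 2" using r2[OF q] .
  have X: "X i = XF i" by (rule X_eq[OF i hzX])
  have Y: "Y (tau i) = YF (tau i)" by (rule Y_eq[OF tau_lt hzY])
  have "dlt (X i) = dlt (XF i)" using X by simp
  also have "\<dots> = padd (pscale (gam (nx i)) (X i)) (pscale (- (gam (sg i) * mu i)) (Y (tau i)))"
    unfolding XF_def using i by (simp add: dlt_add' dlt_sc' pscale_pa)
  finally have e: "dlt (X i) = padd (pscale (gam (nx i)) (X i)) (pscale (- (gam (sg i) * mu i)) (Y (tau i)))" .
  have "dlt (X i) = pzero" using dlt2[OF r arrF_pa[OF i]] .
  then have "padd (pscale (gam (nx i)) (X i)) (pscale (- (gam (sg i) * mu i)) (Y (tau i))) (i, [Fw i]) = 0"
    using e by simp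
  then have "gam (nx i) * gam (nx i) + gam (sg i) * mu i * (gam i * mus (tau i)) = 0"
    unfolding X Y using i by (simp add: XF_def YF_def arr_val')
  moreover have "gam (sg i) = - gam i" using V3[OF i] q by simp
  ultimately show ?thesis by (simp add: algebra_simps neg_eq_iff_add_eq_0)
qed

lemma gam_chain_step:
  assumes q: "q = -1" and i: "i < n"
    and hzX: "\<forall>i<n. \<forall>p. freeF i p \<longrightarrow> X i p = 0" and hzY: "\<forall>i<n. \<forall>p. freeB i p \<longrightarrow> Y i p = 0"
  shows "gam (nx i) = 0 \<longleftrightarrow> gam i = 0"
proof -
  have e: "gam (nx i) * gam (nx i) = gam i * gam i * (mu i * mus (tau i))"
    using xsq[OF q i] hzX hzY i tau_lt by blast
  have nz: "mu i * mus (tau i) \<noteq> 0" using mu_nz[OF i] mus_nz[OF tau_lt] by simp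
  show ?thesis
  proof
    assume "gam (nx i) = 0"
    then have "gam i * gam i * (mu i * mus (tau i)) = 0" using e by simp
    then show "gam i = 0" using nz by simp
  next
    assume "gam i = 0"
    then have "gam (nx i) * gam (nx i) = 0" using e by simp
    then show "gam (nx i) = 0" by simp
  qed
qed

lemma gam_chain:
  assumes q: "q = -1"
    and hzX: "\<forall>i<n. \<forall>p. freeF i p \<longrightarrow> X i p = 0" and hzY: "\<forall>i<n. \<forall>p. freeB i p \<longrightarrow> Y i p = 0"
  shows "i < n \<Longrightarrow> gam i = 0 \<longleftrightarrow> gam 0 = 0"
proof (induction i)
  case 0 then show ?case by simp
next
  case (Suc i)
  then have "gam (nx i) = 0 \<longleftrightarrow> gam i = 0" by (intro gam_chain_step[OF q _ hzX hzY]) simp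
  moreover have "nx i = Suc i" using Suc.prems by simp
  ultimately show ?case using Suc by simp
qed

lemma main_loc:
  assumes gen: "(\<exists>v<n. D v \<noteq> pzero) \<or> (\<exists>i<n. X i \<noteq> pzero) \<or> (\<exists>i<n. Y i \<noteq> pzero)"
  shows "q = -1 \<and> (\<forall>j<n. mu j * mus j = 1)"
proof (cases "\<exists>i<n. \<exists>p. freeF i p \<and> X i p \<noteq> 0")
  case True
  then obtain i p where "i < n" "freeF i p" "X i p \<noteq> 0" by blast
  then show ?thesis by (rule freeF_nz)
next
  case nF: False
  show ?thesis
  proof (cases "\<exists>i<n. \<exists>p. freeB i p \<and> Y i p \<noteq> 0")
    case True
    then obtain i p where "i < n" "freeB i p" "Y i p \<noteq> 0" by blast
    then show ?thesis by (rule freeB_nz)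
  next
    case nB: False
    have hzX: "\<forall>i<n. \<forall>p. freeF i p \<longrightarrow> X i p = 0" using nF by blast
    have hzY: "\<forall>i<n. \<forall>p. freeB i p \<longrightarrow> Y i p = 0" using nB by blast
    show ?thesis
    proof (cases "\<forall>v<n. gam v = 0")
      case True
      have "\<forall>v<n. D v = pzero"
      proof (intro allI impI ext)
        fix v p assume v: "v < n"
        show "D v p = pzero p" using D_form[OF v, of p] True v by simp
      qed
      moreover have "\<forall>i<n. X i = pzero"
      proof (intro allI impI ext)
        fix i p assume i: "i < n"
        have "X i = XF i" using X_eq[OF i] hzX i by blast
        then show "X i p = pzero p" using True i by (simp add: XF_def)
      qed
      moreover have "\<forall>i<n. Y i = pzero"
      proof (intro allI impI ext)
        fix i p assume i: "i < n"
        have "Y i = YF i" using Y_eq[OF i] hzY i by blast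
        then show "Y i p = pzero p" using True i by (simp add: YF_def)
      qed
      ultimately show ?thesis using gen by blast
    next
      case False
      then obtain v where v: "v < n" "gam v \<noteq> 0" by blast
      have "gam v = q * q * gam v" by (rule V4[OF v(1)])
      then have "q * q = 1" using v(2) by (metis mult_cancel_right2)
      then have "(q - 1) * (q + 1) = 0" by (simp add: algebra_simps)
      then have q: "q = -1" using q_ne_1 by (simp add: eq_neg_iff_add_eq_0)
      have g0: "gam 0 \<noteq> 0" using gam_chain[OF q hzX hzY v(1)] v(2) by simp
      have allnz: "\<forall>i<n. gam i \<noteq> 0" using gam_chain[OF q hzX hzY] g0 by blast
      from special_exists show ?thesis
      proof
        assume "\<exists>i<n. sg (nx i) = i"
        then obtain i where i: "i < n" and tv: "sg (nx i) = i" by blast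
        have ti: "tau i = i" using typeV_tau[OF i tv] .
        have si: "sg i = nx i" using typeV_sg[OF i tv] .
        have e: "gam (nx i) * gam (nx i) = gam i * gam i * (mu i * mus i)"
          using xsq[OF q i] hzX hzY i ti by (metis tau_lt)
        have "gam (nx i) = - gam i" using V3[OF i] q si by simp
        then have "gam i * gam i * 1 = gam i * gam i * (mu i * mus i)" using e by simp
        then have "mu i * mus i = 1" using allnz i by (metis mult_cancel_left mult_eq_0_iff)
        then show ?thesis using q all_c[OF i] by blast
      next
        assume "\<exists>k<n. sg k = k"
        then obtain k where k: "k < n" "sg k = k" by blast
        then show ?thesis using gam_fixed[OF k] allnz by blast
      qed
    qed
  qed
qed

lemma dlt_pow_pa: "f \<in> PA \<Longrightarrow> (dlt ^^ k) f \<in> PA"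
  by (induction k) (simp_all add: dlt_pa)

lemma phi_pow_zero: "(phi ^^ k) pzero = pzero"
proof (induction k)
  case 0 show ?case by simp
next
  case (Suc k)
  have "(phi ^^ Suc k) pzero = phi ((phi ^^ k) pzero)" by simp
  also have "\<dots> = pzero" by (simp only: Suc.IH phi_zero)
  finally show ?case .
qed

lemma basis_dlt_zero:
  assumes hv: "\<forall>v<n. D v = pzero" and ha: "\<forall>a. aidx a < n \<longrightarrow> dlt (arr n a) = pzero"
  shows "valid_path n (v, l) \<Longrightarrow> dlt (basis_el (v, l)) = pzero"
proof (induction l arbitrary: v)
  case Nil
  then show ?case using hv by (simp add: vtx_def)
next
  case (Cons a l)
  have va: "aidx a < n" using Cons.prems by (simp add: valid_path_def)
  have vt: "valid_path n (atgt n a, l)" by (rule valid_cons_tl[OF Cons.prems n0])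
  have "dlt (basis_el (v, a # l)) = dlt (pmult n (arr n a) (basis_el (atgt n a, l)))"
    using basis_cons[OF Cons.prems, where 'a='k] by simp
  also have "\<dots> = padd (pmult n (arr n a) (dlt (basis_el (atgt n a, l)))) (pmult n (dlt (arr n a)) (phi (basis_el (atgt n a, l))))"
    by (rule dlt_mult[OF arr_pa[OF n0 va] basis_pa[OF vt]])
  also have "\<dots> = pzero"
  proof -
    have e1: "dlt (basis_el (atgt n a, l)) = pzero" by (rule Cons.IH[OF vt])
    have e2: "dlt (arr n a) = pzero" using ha va by blast
    show ?thesis unfolding e1 e2 pmult_zero_l pmult_zero_r by (simp add: padd_def pzero_def)
  qed
  finally show ?case .
qed

lemma gen_zero:
  assumes hv: "\<forall>v<n. D v = pzero" and ha: "\<forall>a. aidx a < n \<longrightarrow> dlt (arr n a) = pzero"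
  shows "f \<in> PA \<Longrightarrow> dlt f = pzero"
proof (rule ext)
  fix x assume f: "f \<in> PA"
  have "dlt f x = (\<Sum>p\<in>supp f. f p * dlt (basis_el p) x)" by (rule dlt_expand[OF f])
  also have "\<dots> = 0"
  proof (rule sum.neutral, rule ballI)
    fix p assume "p \<in> supp f"
    then have "valid_path n p" using pa_valid[OF f] by (simp add: supp_def)
    then have "dlt (basis_el p) = pzero" using basis_dlt_zero[OF hv ha] by (cases p) simp
    then show "f p * dlt (basis_el p) x = 0" by simp
  qed
  finally show "dlt f x = pzero x" by simp
qed

lemma if_gen:
  assumes inf: "inner_faithful n r m q phi dlt"
  shows "(\<exists>v<n. D v \<noteq> pzero) \<or> (\<exists>i<n. X i \<noteq> pzero) \<or> (\<exists>i<n. Y i \<noteq> pzero)"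
proof (rule ccontr)
  assume "\<not> ?thesis"
  then have hv: "\<forall>v<n. D v = pzero" and hF: "\<forall>i<n. X i = pzero" and hB: "\<forall>i<n. Y i = pzero" by auto
  have ha: "\<forall>a. aidx a < n \<longrightarrow> dlt (arr n a) = pzero"
  proof (intro allI impI)
    fix a assume "aidx a < n" then show "dlt (arr n a) = pzero" using hF hB by (cases a) auto
  qed
  have z: "\<forall>f\<in>PA. dlt f = pzero" using gen_zero[OF hv ha] by blast
  have ann: "\<forall>t\<in>Ix r m. \<forall>f\<in>PA. tact r m phi dlt t f = pzero"
  proof (intro ballI ext)
    fix t :: "'k tel" and f :: "'k pel" and x assume t: "t \<in> Ix r m" and f: "f \<in> PA"
    have "tact r m phi dlt t f x = (\<Sum>ab\<in>tbasis r m. t ab * (phi ^^ fst ab) ((dlt ^^ snd ab) f) x)"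
      by (simp add: tact_def)
    also have "\<dots> = 0"
    proof (rule sum.neutral, rule ballI)
      fix ab :: "nat \<times> nat"
      show "t ab * (phi ^^ fst ab) ((dlt ^^ snd ab) f) x = 0"
      proof (cases "snd ab")
        case 0
        then have "t ab = 0" using t by (cases ab) (simp add: Ix_def)
        then show ?thesis by simp
      next
        case (Suc k)
        have "(dlt ^^ snd ab) f = dlt ((dlt ^^ k) f)" using Suc by simp
        also have "\<dots> = pzero" using z dlt_pow_pa[OF f] by blast
        finally show ?thesis by (simp add: phi_pow_zero)
      qed
    qed
    finally show "tact r m phi dlt t f x = pzero x" by simp
  qed
  have "hopf_ideal r m q (Ix r m :: 'k tel set)" by (rule Ix_hopf[OF m0 r1])
  moreover have "\<exists>t\<in>(Ix r m :: 'k tel set). t \<noteq> (\<lambda>u. 0)" by (rule Ix_nonzero[OF m0 r1])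
  ultimately show False using inf ann unfolding inner_faithful_def by blast
qed

theorem final:
  assumes "inner_faithful n r m q phi dlt"
  shows "r = 2 \<and> (\<forall>i<n. mu i * mus i = 1)"
  using main_loc[OF if_gen[OF assms]] r2 by blast

end

theorem lemma3p14:
  fixes q :: "'k::field" and n r m d :: nat and mu mus :: "nat \<Rightarrow> 'k"
    and phi dlt :: "'k pel \<Rightarrow> 'k pel"
  assumes "r > 1" and "m > 0" and "r dvd m"
    and "primitive_root r q" and "of_nat r \<noteq> (0::'k)"
    and "n \<ge> 3"
    and "taft_module_algebra n r m q phi dlt"
    and "linear_x_action n dlt"
    and "inner_faithful n r m q phi dlt"
    and "0 < d" and "d \<le> n - 1"
    and "\<forall>i<n. mu i \<noteq> 0 \<and> mus i \<noteq> 0"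
    and "\<forall>i<n. phi (vtx i) = vtx ((2 * n - (d + i)) mod n)"
    and "\<forall>i<n. phi (arr n (Fw i)) = pscale (mu i) (arr n (Bw ((2 * n - (d + i + 1)) mod n)))"
    and "\<forall>i<n. phi (arr n (Bw i)) = pscale (mus i) (arr n (Fw ((2 * n - (d + i + 1)) mod n)))"
    and "descends n phi dlt"
  shows "r = 2 \<and> (\<forall>i<n. mu i * mus i = 1)"
proof -
  interpret c: ctx q n r m d mu mus phi dlt
    using assms by unfold_locales auto
  show ?thesis using c.final assms(9) by blast
qed

end
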